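(* Let $\mathbf{g}=-dt^2+a^2(t)\sigma_{ij}(x)dx^idx^j$ be an FLRW metric on $\mathbb{R}^+\times\mathbb{R}^n$, where $\sigma$ is a Riemannian metric on $\mathbb{R}^n$ and $a$ satisfies the standing assumptions in the context. Then there exists a constant $C_1>0$ such that for every $T>t_0$ and every (sufficiently regular) $\phi:[t_0,T)\times\mathbb{R}^n\to\mathbb{R}$, $$\sup_{t_0\le t<T}E^{1/2}[\phi](t)\le C_1\Big(E^{1/2}[\phi](t_0)+\int_{t_0}^T a(t)\,\|\square_{\mathbf{g}}\phi(t,\cdot)\|_{L^2_\sigma}\,dt\Big),$$ where $$E[\phi](t)=\frac12\int_{\mathbb{R}^n}\Big[a^2(\partial_t\phi)^2+\sigma^{ij}\partial_i\phi\,\partial_j\phi\Big](t,x)\,|\sigma|^{1/2}\,dx .$$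
   Context: Standing assumptions: $t_0>0$ is fixed, $a$ is smooth with $a(t)>0$ and $\dot a(t)>0$ for $t\ge t_0$, and $\int_{t_0}^\infty a(s)^{-1}ds<\infty$. $\sigma^{ij}$ are the components of the inverse of $\sigma_{ij}$ and $|\sigma|=\det(\sigma_{ij})$. $\|f\|_{L^2_\sigma}=\big(\int_{\mathbb{R}^n}|f(x)|^2|\sigma|^{1/2}dx\big)^{1/2}$. $\square_{\mathbf{g}}\phi=\frac{1}{\sqrt{|\mathbf{g}|}}\partial_\alpha(\mathbf{g}^{\alpha\beta}\sqrt{|\mathbf{g}|}\partial_\beta\phi)$ with $|\mathbf{g}|=-\det(\mathbf{g}_{\alpha\beta})$, i.e. $\square_{\mathbf{g}}\phi=-\partial_t^2\phi-n\frac{\dot a}{a}\partial_t\phi+a^{-2}\Delta_\sigma\phi$. *)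

theory Defs
  imports "HOL-Analysis.Analysis"
begin

definition pdir :: "'a::euclidean_space \<Rightarrow> ('a \<Rightarrow> real) \<Rightarrow> 'a \<Rightarrow> real" where
  "pdir b f x = deriv (\<lambda>h. f (x + h *\<^sub>R b)) 0"

primrec iter_pd :: "'a::euclidean_space list \<Rightarrow> ('a \<Rightarrow> real) \<Rightarrow> 'a \<Rightarrow> real" where
  "iter_pd [] f = f"
| "iter_pd (b # bs) f = pdir b (iter_pd bs f)"

definition smooth_on :: "'a::euclidean_space set \<Rightarrow> ('a \<Rightarrow> real) \<Rightarrow> bool" where
  "smooth_on S f \<longleftrightarrow>
     (\<forall>bs. set bs \<subseteq> Basis \<longrightarrow>
        continuous_on S (iter_pd bs f) \<and>
        (\<forall>b\<in>Basis. \<forall>x\<in>S. (\<lambda>h. iter_pd bs f (x + h *\<^sub>R b)) differentiable (at 0)))"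

definition riemannian_metric :: "(real^'n \<Rightarrow> real^'n^'n) \<Rightarrow> bool" where
  "riemannian_metric \<sigma> \<longleftrightarrow>
     (\<forall>x. transpose (\<sigma> x) = \<sigma> x \<and> (\<forall>v. v \<noteq> 0 \<longrightarrow> v \<bullet> (\<sigma> x *v v) > 0)) \<and>
     (\<forall>i j. smooth_on UNIV (\<lambda>x. \<sigma> x $ i $ j))"

definition sig_inv :: "(real^'n \<Rightarrow> real^'n^'n) \<Rightarrow> real^'n \<Rightarrow> 'n \<Rightarrow> 'n \<Rightarrow> real" where
  "sig_inv \<sigma> x i j = matrix_inv (\<sigma> x) $ i $ j"

definition sig_det :: "(real^'n \<Rightarrow> real^'n^'n) \<Rightarrow> real^'n \<Rightarrow> real" where
  "sig_det \<sigma> x = det (\<sigma> x)"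

definition dt :: "(real \<Rightarrow> real^'n \<Rightarrow> real) \<Rightarrow> real \<Rightarrow> real^'n \<Rightarrow> real" where
  "dt \<phi> t x = deriv (\<lambda>s. \<phi> s x) t"

definition dxi :: "'n \<Rightarrow> (real^'n \<Rightarrow> real) \<Rightarrow> real^'n \<Rightarrow> real" where
  "dxi i f x = deriv (\<lambda>h. f (x + h *\<^sub>R axis i 1)) 0"

definition lap_sigma :: "(real^'n \<Rightarrow> real^'n^'n) \<Rightarrow> (real^'n \<Rightarrow> real) \<Rightarrow> real^'n \<Rightarrow> real" where
  "lap_sigma \<sigma> f x =
     (1 / sqrt (sig_det \<sigma> x)) *
     (\<Sum>i\<in>UNIV. dxi i (\<lambda>y. \<Sum>j\<in>UNIV. sig_inv \<sigma> y i j * sqrt (sig_det \<sigma> y) * dxi j f y) x)"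

text \<open>Wave operator of g = -dt^2 + a(t)^2 sigma_ij dx^i dx^j:
  -d_t^2 phi - n (a'/a) d_t phi + a^{-2} Delta_sigma phi\<close>
definition box_g :: "(real \<Rightarrow> real) \<Rightarrow> (real^'n \<Rightarrow> real^'n^'n) \<Rightarrow> (real \<Rightarrow> real^'n \<Rightarrow> real)
    \<Rightarrow> real \<Rightarrow> real^'n \<Rightarrow> real" where
  "box_g a \<sigma> \<phi> t x =
     - dt (dt \<phi>) t x - real CARD('n) * (deriv a t / a t) * dt \<phi> t x
     + (1 / (a t)\<^sup>2) * lap_sigma \<sigma> (\<phi> t) x"

definition energy :: "(real \<Rightarrow> real) \<Rightarrow> (real^'n \<Rightarrow> real^'n^'n) \<Rightarrow> (real \<Rightarrow> real^'n \<Rightarrow> real)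
    \<Rightarrow> real \<Rightarrow> real" where
  "energy a \<sigma> \<phi> t =
     1/2 * (\<integral>x. ((a t)\<^sup>2 * (dt \<phi> t x)\<^sup>2
                 + (\<Sum>i\<in>UNIV. \<Sum>j\<in>UNIV. sig_inv \<sigma> x i j * dxi i (\<phi> t) x * dxi j (\<phi> t) x))
                * sqrt (sig_det \<sigma> x) \<partial>lborel)"

definition L2_sigma :: "(real^'n \<Rightarrow> real^'n^'n) \<Rightarrow> (real^'n \<Rightarrow> real) \<Rightarrow> real" where
  "L2_sigma \<sigma> f = sqrt (\<integral>x. (f x)\<^sup>2 * sqrt (sig_det \<sigma> x) \<partial>lborel)"

end

theory Submission
  imports Defs
begin


lemma deriv_shift0: "deriv (\<lambda>h. f (s + h)) 0 = deriv f (s::real)"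
proof -
  have "\<And>D. ((\<lambda>h. f (s + h)) has_field_derivative D) (at 0) \<longleftrightarrow> (f has_field_derivative D) (at s)"
    using DERIV_shift[of f _ 0 s] by (simp add: add.commute)
  then show ?thesis unfolding deriv_def by simp
qed

lemma deriv_zero_right:
  fixes g :: "real \<Rightarrow> real"
  assumes "(g has_real_derivative D) (at s)" "s < T" "\<And>u. u \<in> {s..<T} \<Longrightarrow> g u = 0"
  shows "D = 0"
proof -
  have "(g has_real_derivative D) (at s within {s..<T})"
    using assms(1) by (rule has_field_derivative_at_within)
  then have "((\<lambda>_. 0) has_real_derivative D) (at s within {s..<T})"
    by (rule has_field_derivative_transform_within[where d=1]) (use assms in auto)
  moreover have "((\<lambda>_. 0) has_real_derivative 0) (at s within {s..<T})" by simp
  moreover have "at s within {s..<T} \<noteq> bot"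
  proof -
    have "{s..<T} - {s} = {s<..<T}" by auto
    then show ?thesis using assms(2) by (simp add: at_within_eq_bot_iff)
  qed
  ultimately show ?thesis using has_field_derivative_unique by blast
qed

lemma line_deriv:
  fixes f :: "'a::real_normed_vector \<Rightarrow> real"
  assumes "\<And>q. q \<in> U \<Longrightarrow> ((\<lambda>h. f (q + h *\<^sub>R b)) has_real_derivative fb q) (at 0)"
    and "q + s *\<^sub>R b \<in> U"
  shows "((\<lambda>s. f (q + s *\<^sub>R b)) has_real_derivative fb (q + s *\<^sub>R b)) (at s)"
proof -
  have "((\<lambda>h. f (q + s *\<^sub>R b + h *\<^sub>R b)) has_real_derivative fb (q + s *\<^sub>R b)) (at 0)"
    using assms by blast
  then have "((\<lambda>x. (\<lambda>s. f (q + s *\<^sub>R b)) (x + s)) has_real_derivative fb (q + s *\<^sub>R b)) (at 0)"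
    by (simp add: algebra_simps scaleR_add_left)
  then show ?thesis using DERIV_shift[of "\<lambda>s. f (q + s *\<^sub>R b)" _ 0 s] by simp
qed

lemma deriv_zero_closed:
  fixes f :: "'a::real_normed_vector \<Rightarrow> real"
  assumes "closed K" "x \<notin> K" "\<And>y. y \<notin> K \<Longrightarrow> f y = 0"
  shows "((\<lambda>h. f (x + h *\<^sub>R b)) has_real_derivative 0) (at 0)"
proof -
  let ?S = "(\<lambda>h::real. x + h *\<^sub>R b) -` (- K)"
  have "open ?S"
    using assms(1) by (intro open_vimage continuous_intros) auto
  moreover have "0 \<in> ?S" using assms by simp
  ultimately show ?thesis
    by (rule has_field_derivative_transform_within_open[OF DERIV_const[of 0]]) (use assms in auto)
qed



lemma schwarz_aux:
  fixes f :: "'a::real_normed_vector \<Rightarrow> real"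
  assumes U: "ball p r \<subseteq> U" and h: "0 < h" "h * (norm b + norm c) < r"
   and fb: "\<And>q. q\<in>U \<Longrightarrow> ((\<lambda>h. f (q + h *\<^sub>R b)) has_real_derivative fb q) (at 0)"
   and fbc: "\<And>q. q\<in>U \<Longrightarrow> ((\<lambda>h. fb (q + h *\<^sub>R c)) has_real_derivative fbc q) (at 0)"
  shows "\<exists>q. dist q p \<le> h * (norm b + norm c) \<and>
    f (p + h *\<^sub>R b + h *\<^sub>R c) - f (p + h *\<^sub>R b) - f (p + h *\<^sub>R c) + f p = h\<^sup>2 * fbc q"
proof -
  have inU: "p + s *\<^sub>R b + y *\<^sub>R c \<in> U" if "0 \<le> s" "s \<le> h" "0 \<le> y" "y \<le> h" for s y
  proof -
    have "norm (s *\<^sub>R b + y *\<^sub>R c) \<le> s * norm b + y * norm c"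
      using that by (metis abs_of_nonneg norm_scaleR norm_triangle_ineq add_mono order_refl)
    also have "\<dots> \<le> h * norm b + h * norm c"
      using that by (intro add_mono mult_right_mono) auto
    also have "\<dots> < r" using h by (simp add: algebra_simps)
    finally have "dist (p + s *\<^sub>R b + y *\<^sub>R c) p < r"
      by (simp add: dist_norm add.assoc)
    then have "p + s *\<^sub>R b + y *\<^sub>R c \<in> ball p r"
      by (simp add: dist_commute)
    then show ?thesis using U by blast
  qed
  define g where "g s = f (p + h *\<^sub>R c + s *\<^sub>R b) - f (p + s *\<^sub>R b)" for s
  have "\<exists>z>0. z < h \<and> g h - g 0 = (h - 0) * (fb (p + h *\<^sub>R c + z *\<^sub>R b) - fb (p + z *\<^sub>R b))"
    unfolding g_def
  proof (rule MVT2[OF h(1)])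
    fix s assume s: "0 \<le> s" "s \<le> h"
    have "p + h *\<^sub>R c + s *\<^sub>R b \<in> U" using inU[of s h] s h by (simp add: algebra_simps)
    moreover have "p + s *\<^sub>R b \<in> U" using inU[of s 0] s h by simp
    ultimately show "((\<lambda>s. f (p + h *\<^sub>R c + s *\<^sub>R b) - f (p + s *\<^sub>R b)) has_real_derivative
       fb (p + h *\<^sub>R c + s *\<^sub>R b) - fb (p + s *\<^sub>R b)) (at s)"
      by (intro DERIV_diff line_deriv[of U f b fb] fb) auto
  qed
  then obtain \<xi> where xi: "0 < \<xi>" "\<xi> < h"
    and g: "g h - g 0 = h * (fb (p + h *\<^sub>R c + \<xi> *\<^sub>R b) - fb (p + \<xi> *\<^sub>R b))" by auto
  have "\<exists>z>0. z < h \<and> fb (p + \<xi> *\<^sub>R b + h *\<^sub>R c) - fb (p + \<xi> *\<^sub>R b + 0 *\<^sub>R c) = (h - 0) * fbc (p + \<xi> *\<^sub>R b + z *\<^sub>R c)"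
  proof (rule MVT2[OF h(1)])
    fix y assume y: "0 \<le> y" "y \<le> h"
    show "((\<lambda>y. fb (p + \<xi> *\<^sub>R b + y *\<^sub>R c)) has_real_derivative fbc (p + \<xi> *\<^sub>R b + y *\<^sub>R c)) (at y)"
      using inU[of \<xi> y] xi y by (intro line_deriv[of U fb c fbc] fbc) auto
  qed
  then obtain \<eta> where eta: "0 < \<eta>" "\<eta> < h"
    and k: "fb (p + \<xi> *\<^sub>R b + h *\<^sub>R c) - fb (p + \<xi> *\<^sub>R b) = h * fbc (p + \<xi> *\<^sub>R b + \<eta> *\<^sub>R c)" by auto
  have "dist (p + \<xi> *\<^sub>R b + \<eta> *\<^sub>R c) p \<le> h * (norm b + norm c)"
  proof -
    have "dist (p + \<xi> *\<^sub>R b + \<eta> *\<^sub>R c) p = norm (\<xi> *\<^sub>R b + \<eta> *\<^sub>R c)"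
      by (simp add: dist_norm add.assoc)
    also have "\<dots> \<le> \<xi> * norm b + \<eta> * norm c"
      using xi eta by (metis abs_of_nonneg less_imp_le norm_scaleR norm_triangle_ineq add_mono order_refl)
    also have "\<dots> \<le> h * norm b + h * norm c"
      using xi eta by (intro add_mono mult_right_mono) auto
    finally show ?thesis by (simp add: algebra_simps)
  qed
  moreover have "f (p + h *\<^sub>R b + h *\<^sub>R c) - f (p + h *\<^sub>R b) - f (p + h *\<^sub>R c) + f p
      = h\<^sup>2 * fbc (p + \<xi> *\<^sub>R b + \<eta> *\<^sub>R c)"
  proof -
    have "f (p + h *\<^sub>R b + h *\<^sub>R c) - f (p + h *\<^sub>R b) - f (p + h *\<^sub>R c) + f p = g h - g 0"
      unfolding g_def by (simp add: algebra_simps)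
    also have "\<dots> = h * (h * fbc (p + \<xi> *\<^sub>R b + \<eta> *\<^sub>R c))"
      using g k by (simp add: algebra_simps)
    finally show ?thesis by (simp add: power2_eq_square)
  qed
  ultimately show ?thesis by blast
qed

lemma schwarz:
  fixes f :: "'a::real_normed_vector \<Rightarrow> real"
  assumes U: "open U" "p \<in> U"
   and fb: "\<And>q. q\<in>U \<Longrightarrow> ((\<lambda>h. f (q + h *\<^sub>R b)) has_real_derivative fb q) (at 0)"
   and fc: "\<And>q. q\<in>U \<Longrightarrow> ((\<lambda>h. f (q + h *\<^sub>R c)) has_real_derivative fc q) (at 0)"
   and fbc: "\<And>q. q\<in>U \<Longrightarrow> ((\<lambda>h. fb (q + h *\<^sub>R c)) has_real_derivative fbc q) (at 0)"
   and fcb: "\<And>q. q\<in>U \<Longrightarrow> ((\<lambda>h. fc (q + h *\<^sub>R b)) has_real_derivative fcb q) (at 0)"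
   and cont: "isCont fbc p" "isCont fcb p"
  shows "fbc p = fcb p"
proof (rule ccontr)
  assume ne: "fbc p \<noteq> fcb p"
  define e where "e = \<bar>fbc p - fcb p\<bar> / 2"
  have e: "e > 0" using ne by (simp add: e_def)
  obtain r where r: "r > 0" "ball p r \<subseteq> U" using U openE by blast
  obtain d1 where d1: "d1 > 0" "\<And>q. dist q p < d1 \<Longrightarrow> dist (fbc q) (fbc p) < e"
    using cont(1) e unfolding continuous_at_eps_delta by blast
  obtain d2 where d2: "d2 > 0" "\<And>q. dist q p < d2 \<Longrightarrow> dist (fcb q) (fcb p) < e"
    using cont(2) e unfolding continuous_at_eps_delta by blast
  define m where "m = min r (min d1 d2)"
  define N where "N = norm b + norm c + 1"
  have m: "m > 0" using r d1 d2 by (simp add: m_def)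
  have N: "N > 0" "norm b + norm c < N" by (auto simp: N_def intro: add_nonneg_pos)
  define h where "h = m / (2 * N)"
  have h: "h > 0" using m N by (simp add: h_def)
  have hm: "h * (norm b + norm c) < m"
  proof -
    have "h * (norm b + norm c) \<le> h * N" using h N by (intro mult_left_mono) auto
    also have "\<dots> = m / 2" using N by (simp add: h_def)
    also have "\<dots> < m" using m by simp
    finally show ?thesis .
  qed
  have hr: "h * (norm b + norm c) < r" using hm by (simp add: m_def)
  obtain q1 where q1: "dist q1 p \<le> h * (norm b + norm c)"
    "f (p + h *\<^sub>R b + h *\<^sub>R c) - f (p + h *\<^sub>R b) - f (p + h *\<^sub>R c) + f p = h\<^sup>2 * fbc q1"
    using schwarz_aux[OF r(2) h hr fb fbc] by blast
  obtain q2 where q2: "dist q2 p \<le> h * (norm c + norm b)"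
    "f (p + h *\<^sub>R c + h *\<^sub>R b) - f (p + h *\<^sub>R c) - f (p + h *\<^sub>R b) + f p = h\<^sup>2 * fcb q2"
    using schwarz_aux[OF r(2) h _ fc fcb] hr by (auto simp: add.commute)
  have "h\<^sup>2 * fbc q1 = h\<^sup>2 * fcb q2" using q1(2) q2(2) by (simp add: algebra_simps)
  then have eq: "fbc q1 = fcb q2" using h by simp
  have "dist q1 p < d1" using q1(1) hm by (simp add: m_def)
  then have 1: "\<bar>fbc q1 - fbc p\<bar> < e" using d1 by (simp add: dist_real_def)
  have "dist q2 p < d2" using q2(1) hm by (simp add: m_def add.commute)
  then have 2: "\<bar>fcb q2 - fcb p\<bar> < e" using d2 by (simp add: dist_real_def)
  have "\<bar>fbc p - fcb p\<bar> < 2 * e" using 1 2 eq by linarith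
  then show False by (simp add: e_def)
qed



definition C1d :: "'a::real_normed_vector \<Rightarrow> ('a \<Rightarrow> real) \<Rightarrow> ('a \<Rightarrow> real) \<Rightarrow> bool" where
  "C1d b f f' \<longleftrightarrow> continuous_on UNIV f \<and> continuous_on UNIV f' \<and>
     (\<forall>x. ((\<lambda>h. f (x + h *\<^sub>R b)) has_real_derivative f' x) (at 0))"

definition C1 :: "'a::real_normed_vector \<Rightarrow> ('a \<Rightarrow> real) \<Rightarrow> bool" where
  "C1 b f \<longleftrightarrow> (\<exists>f'. C1d b f f')"

lemma C1d_deriv: "C1d b f f' \<Longrightarrow> deriv (\<lambda>h. f (x + h *\<^sub>R b)) 0 = f' x"
  unfolding C1d_def by (blast intro: DERIV_imp_deriv)

lemma C1d_cont: "C1d b f f' \<Longrightarrow> continuous_on UNIV f"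
  unfolding C1d_def by blast

lemma C1_cont: "C1 b f \<Longrightarrow> continuous_on UNIV f"
  unfolding C1_def C1d_def by blast

lemma C1d_const: "C1d b (\<lambda>_. c) (\<lambda>_. 0)"
  unfolding C1d_def by auto

lemma C1_const: "C1 b (\<lambda>_. c)"
  unfolding C1_def using C1d_const by blast

lemma C1d_add: "C1d b f f' \<Longrightarrow> C1d b g g' \<Longrightarrow> C1d b (\<lambda>x. f x + g x) (\<lambda>x. f' x + g' x)"
  unfolding C1d_def by (auto intro!: continuous_intros DERIV_add)

lemma C1d_diff: "C1d b f f' \<Longrightarrow> C1d b g g' \<Longrightarrow> C1d b (\<lambda>x. f x - g x) (\<lambda>x. f' x - g' x)"
  unfolding C1d_def by (auto intro!: continuous_intros DERIV_diff)

lemma C1d_mult: "C1d b f f' \<Longrightarrow> C1d b g g' \<Longrightarrow> C1d b (\<lambda>x. f x * g x) (\<lambda>x. f' x * g x + f x * g' x)"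
  unfolding C1d_def
proof (intro conjI allI)
  fix x assume "continuous_on UNIV f \<and> continuous_on UNIV f' \<and> (\<forall>x. ((\<lambda>h. f (x + h *\<^sub>R b)) has_real_derivative f' x) (at 0))"
    and "continuous_on UNIV g \<and> continuous_on UNIV g' \<and> (\<forall>x. ((\<lambda>h. g (x + h *\<^sub>R b)) has_real_derivative g' x) (at 0))"
  then have "((\<lambda>h. f (x + h *\<^sub>R b) * g (x + h *\<^sub>R b)) has_real_derivative f' x * g (x + 0 *\<^sub>R b) + g' x * f (x + 0 *\<^sub>R b)) (at 0)"
    by (intro DERIV_mult) auto
  then show "((\<lambda>h. f (x + h *\<^sub>R b) * g (x + h *\<^sub>R b)) has_real_derivative f' x * g x + f x * g' x) (at 0)"
    by (simp add: mult.commute)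
qed (auto intro!: continuous_intros)

lemma C1_add: "C1 b f \<Longrightarrow> C1 b g \<Longrightarrow> C1 b (\<lambda>x. f x + g x)"
  unfolding C1_def using C1d_add by blast
lemma C1_diff: "C1 b f \<Longrightarrow> C1 b g \<Longrightarrow> C1 b (\<lambda>x. f x - g x)"
  unfolding C1_def using C1d_diff by blast
lemma C1_mult: "C1 b f \<Longrightarrow> C1 b g \<Longrightarrow> C1 b (\<lambda>x. f x * g x)"
  unfolding C1_def using C1d_mult by blast

lemma C1_sum: "finite I \<Longrightarrow> (\<And>i. i \<in> I \<Longrightarrow> C1 b (f i)) \<Longrightarrow> C1 b (\<lambda>x. \<Sum>i\<in>I. f i x)"
proof (induction I rule: finite_induct)
  case empty then show ?case by (simp add: C1_const)
next
  case (insert i I) then show ?case by (simp add: C1_add)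
qed

lemma C1_prod: "finite I \<Longrightarrow> (\<And>i. i \<in> I \<Longrightarrow> C1 b (f i)) \<Longrightarrow> C1 b (\<lambda>x. \<Prod>i\<in>I. f i x)"
proof (induction I rule: finite_induct)
  case empty then show ?case by (simp add: C1_const)
next
  case (insert i I) then show ?case by (simp add: C1_mult)
qed

lemma C1d_divide:
  assumes "C1d b f f'" "C1d b g g'" "\<And>x. g x \<noteq> 0"
  shows "C1d b (\<lambda>x. f x / g x) (\<lambda>x. (f' x * g x - f x * g' x) / (g x * g x))"
  unfolding C1d_def
proof (intro conjI allI)
  fix x
  have "((\<lambda>h. f (x + h *\<^sub>R b) / g (x + h *\<^sub>R b)) has_real_derivative
     (f' x * g (x + 0 *\<^sub>R b) - f (x + 0 *\<^sub>R b) * g' x) / (g (x + 0 *\<^sub>R b) * g (x + 0 *\<^sub>R b))) (at 0)"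
    using assms unfolding C1d_def by (intro DERIV_divide) auto
  then show "((\<lambda>h. f (x + h *\<^sub>R b) / g (x + h *\<^sub>R b)) has_real_derivative (f' x * g x - f x * g' x) / (g x * g x)) (at 0)"
    by simp
qed (use assms in \<open>auto intro!: continuous_intros simp: C1d_def\<close>)

lemma C1_divide: "C1 b f \<Longrightarrow> C1 b g \<Longrightarrow> (\<And>x. g x \<noteq> 0) \<Longrightarrow> C1 b (\<lambda>x. f x / g x)"
  unfolding C1_def using C1d_divide by blast

lemma C1d_sqrt:
  assumes "C1d b f f'" "\<And>x. f x > 0"
  shows "C1d b (\<lambda>x. sqrt (f x)) (\<lambda>x. inverse (sqrt (f x)) / 2 * f' x)"
  unfolding C1d_def
proof (intro conjI allI)
  fix x
  have "((\<lambda>h. sqrt (f (x + h *\<^sub>R b))) has_real_derivative inverse (sqrt (f (x + 0 *\<^sub>R b))) / 2 * f' x) (at 0)"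
    using assms unfolding C1d_def by (intro DERIV_chain2[OF DERIV_real_sqrt]) auto
  then show "((\<lambda>h. sqrt (f (x + h *\<^sub>R b))) has_real_derivative inverse (sqrt (f x)) / 2 * f' x) (at 0)"
    by simp
qed (use assms in \<open>auto intro!: continuous_intros simp: C1d_def\<close>, metis less_irrefl)

lemma C1_sqrt: "C1 b f \<Longrightarrow> (\<And>x. f x > 0) \<Longrightarrow> C1 b (\<lambda>x. sqrt (f x))"
  unfolding C1_def using C1d_sqrt by blast

lemma C1_det:
  fixes M :: "'a::real_normed_vector \<Rightarrow> real^'n^'n"
  assumes "\<And>i j. C1 b (\<lambda>x. M x $ i $ j)"
  shows "C1 b (\<lambda>x. det (M x))"
  unfolding det_def
  by (intro C1_sum C1_prod C1_mult C1_const assms) auto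

lemma continuous_on_det:
  fixes M :: "'a::topological_space \<Rightarrow> real^'n^'n"
  assumes "\<And>i j. continuous_on S (\<lambda>x. M x $ i $ j)"
  shows "continuous_on S (\<lambda>x. det (M x))"
  unfolding det_def
  by (intro continuous_on_sum continuous_on_prod continuous_intros assms)



lemma posdef_invertible:
  fixes S :: "real^'n^'n"
  assumes "\<And>v. v \<noteq> 0 \<Longrightarrow> v \<bullet> (S *v v) > 0"
  shows "invertible S"
  unfolding invertible_left_inverse matrix_left_invertible_ker
  using assms by force

lemma posdef_det_pos:
  fixes S :: "real^'n^'n"
  assumes pd: "\<And>v. v \<noteq> 0 \<Longrightarrow> v \<bullet> (S *v v) > 0"
  shows "det S > 0"
proof (rule ccontr)
  assume "\<not> det S > 0"
  define A where "A t = t *\<^sub>R S + (1 - t) *\<^sub>R (mat 1 :: real^'n^'n)" for t :: real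
  have cont: "continuous_on {0..1} (\<lambda>t. det (A t))"
    by (rule continuous_on_det) (simp add: A_def, intro continuous_intros)
  have "det (A 1) \<le> 0" using \<open>\<not> det S > 0\<close> by (simp add: A_def)
  moreover have "det (A 0) = 1" by (simp add: A_def)
  ultimately obtain t where t: "0 \<le> t" "t \<le> 1" "det (A t) = 0"
    using IVT2'[of "\<lambda>t. det (A t)" 1 0 0] cont by auto
  have "invertible (A t)"
  proof (rule posdef_invertible)
    fix v :: "real^'n" assume v: "v \<noteq> 0"
    have "A t *v v = t *\<^sub>R (S *v v) + (1 - t) *\<^sub>R v"
      by (simp add: A_def matrix_vector_mult_add_rdistrib scaleR_matrix_vector_assoc[symmetric])
    then have "v \<bullet> (A t *v v) = t * (v \<bullet> (S *v v)) + (1 - t) * (v \<bullet> v)"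
      by (simp add: inner_add_right)
    moreover have "v \<bullet> (S *v v) > 0" "v \<bullet> v > 0" using pd v by auto
    ultimately show "v \<bullet> (A t *v v) > 0"
      using t by (cases "t = 0") (auto intro!: add_pos_nonneg)
  qed
  then show False using t(3) by (simp add: invertible_det_nz)
qed

lemma matrix_inv_props:
  fixes S :: "real^'n^'n"
  assumes "invertible S"
  shows "S ** matrix_inv S = mat 1" "matrix_inv S ** S = mat 1"
proof -
  have "\<exists>A'. S ** A' = mat 1 \<and> A' ** S = mat 1" using assms unfolding invertible_def .
  then have "S ** matrix_inv S = mat 1 \<and> matrix_inv S ** S = mat 1"
    unfolding matrix_inv_def by (rule someI_ex)
  then show "S ** matrix_inv S = mat 1" "matrix_inv S ** S = mat 1" by auto
qed

lemma matrix_inv_cramer: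
  fixes S :: "real^'n^'n"
  assumes "det S \<noteq> 0"
  shows "matrix_inv S $ i $ j = det (\<chi> r c. if c = i then axis j 1 $ r else S $ r $ c) / det S"
proof -
  have inv: "invertible S" using assms by (simp add: invertible_det_nz)
  have "S *v (matrix_inv S *v axis j 1) = axis j 1"
    using matrix_inv_props(1)[OF inv] by (simp add: matrix_vector_mul_assoc)
  then have "matrix_inv S *v axis j 1 = (\<chi> k. det(\<chi> r c. if c = k then axis j 1 $ r else S $ r $ c) / det S)"
    using cramer[OF assms] by blast
  then have "(matrix_inv S *v axis j 1) $ i = det(\<chi> r c. if c = i then axis j 1 $ r else S $ r $ c) / det S"
    by simp
  then show ?thesis by (simp add: matrix_vector_mult_basis column_def)
qed

lemma matrix_inv_sym:
  fixes S :: "real^'n^'n"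
  assumes "transpose S = S" "invertible S"
  shows "matrix_inv S $ i $ j = matrix_inv S $ j $ i"
proof -
  let ?B = "matrix_inv S"
  have "transpose ?B ** S = mat 1"
    by (metis assms matrix_inv_props(1) matrix_transpose_mul transpose_mat)
  then have "transpose ?B = transpose ?B ** (S ** ?B)"
    using matrix_inv_props(1)[OF assms(2)] by (simp add: matrix_mul_rid)
  also have "\<dots> = ?B"
    by (simp add: matrix_mul_assoc \<open>transpose ?B ** S = mat 1\<close> matrix_mul_lid)
  finally have "transpose ?B = ?B" .
  then show ?thesis by (metis transpose_def vec_lambda_beta)
qed

lemma matrix_inv_psd:
  fixes S :: "real^'n^'n"
  assumes pd: "\<And>v. v \<noteq> 0 \<Longrightarrow> v \<bullet> (S *v v) > 0"
  shows "0 \<le> (\<Sum>i\<in>UNIV. \<Sum>j\<in>UNIV. matrix_inv S $ i $ j * v $ i * v $ j)"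
proof -
  have inv: "invertible S" using posdef_invertible pd by blast
  define u where "u = matrix_inv S *v v"
  have Su: "S *v u = v"
    unfolding u_def using matrix_inv_props(1)[OF inv] by (simp add: matrix_vector_mul_assoc)
  have "(\<Sum>i\<in>UNIV. \<Sum>j\<in>UNIV. matrix_inv S $ i $ j * v $ i * v $ j) = v \<bullet> u"
    by (simp add: u_def inner_vec_def matrix_vector_mult_def sum_distrib_left mult.commute mult.left_commute)
  also have "\<dots> = u \<bullet> (S *v u)" by (simp add: Su inner_commute)
  also have "\<dots> \<ge> 0" using pd[of u] by (cases "u = 0") auto
  finally show ?thesis .
qed

lemma smooth_on_deriv:
  assumes "smooth_on S f" "set bs \<subseteq> Basis" "b \<in> Basis" "x \<in> S"
  shows "((\<lambda>h. iter_pd bs f (x + h *\<^sub>R b)) has_real_derivative iter_pd (b # bs) f x) (at 0)"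
proof -
  have "(\<lambda>h. iter_pd bs f (x + h *\<^sub>R b)) differentiable (at 0)"
    using assms unfolding smooth_on_def by blast
  then show ?thesis
    by (simp add: pdir_def DERIV_deriv_iff_real_differentiable)
qed

lemma smooth_on_cont:
  assumes "smooth_on S f" "set bs \<subseteq> Basis"
  shows "continuous_on S (iter_pd bs f)"
  using assms unfolding smooth_on_def by blast

lemma smooth_C1d:
  assumes "smooth_on UNIV f" "b \<in> Basis"
  shows "C1d b f (pdir b f)"
  unfolding C1d_def
  using smooth_on_cont[OF assms(1), of "[]"] smooth_on_cont[OF assms(1), of "[b]"]
    smooth_on_deriv[OF assms(1), of "[]" b] assms(2) by auto



lemma integrable_cc:
  fixes f :: "'a::euclidean_space \<Rightarrow> real"
  assumes "continuous_on UNIV f" "compact K" "\<And>x. x \<notin> K \<Longrightarrow> f x = 0"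
  shows "integrable lborel f"
proof -
  have "integrable lborel (\<lambda>x. indicator K x *\<^sub>R f x)"
    by (rule borel_integrable_compact) (use assms in \<open>auto intro: continuous_on_subset\<close>)
  moreover have "(\<lambda>x. indicator K x *\<^sub>R f x) = f" using assms(3) by (auto simp: indicator_def fun_eq_iff)
  ultimately show ?thesis by simp
qed

lemma integral_translate:
  fixes f :: "'a::euclidean_space \<Rightarrow> real"
  assumes "f \<in> borel_measurable borel"
  shows "integral\<^sup>L lborel (\<lambda>x. f (c + x)) = integral\<^sup>L lborel f"
proof -
  have "integral\<^sup>L lborel f = integral\<^sup>L (distr lborel borel ((+) c)) f" by (simp add: lborel_distr_plus)
  also have "\<dots> = integral\<^sup>L lborel (\<lambda>x. f (c + x))" by (rule integral_distr) (use assms in auto)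
  finally show ?thesis by simp
qed

lemma integrable_translate:
  fixes f :: "'a::euclidean_space \<Rightarrow> real"
  assumes "f \<in> borel_measurable borel" "integrable lborel f"
  shows "integrable lborel (\<lambda>x. f (c + x))"
proof -
  have "integrable (distr lborel borel ((+) c)) f" using assms by (simp add: lborel_distr_plus)
  then show ?thesis by (subst (asm) integrable_distr_eq) (use assms in auto)
qed

lemma integral_partial_zero:
  fixes F DF :: "'a::euclidean_space \<Rightarrow> real"
  assumes K: "compact K" and F0: "\<And>x. x \<notin> K \<Longrightarrow> F x = 0"
   and Fc: "continuous_on UNIV F" and DFc: "continuous_on UNIV DF"
   and D: "\<And>x. ((\<lambda>h. F (x + h *\<^sub>R b)) has_real_derivative DF x) (at 0)"
  shows "integral\<^sup>L lborel DF = 0"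
proof -
  have DF0: "DF x = 0" if "x \<notin> K" for x
    using DERIV_unique[OF D[of x] deriv_zero_closed[OF compact_imp_closed[OF K] that F0]] .
  obtain R0 c where R0: "K \<subseteq> cball c R0" "0 \<le> R0"
    using compact_imp_bounded[OF K] bounded_subset_cball by blast
  define R where "R = R0 + norm c + norm b"
  have outR: "x + h *\<^sub>R b \<notin> K" if "x \<notin> cball 0 R" "h \<in> {0..1}" for x h
  proof
    assume "x + h *\<^sub>R b \<in> K"
    then have "norm (x + h *\<^sub>R b - c) \<le> R0" using R0 by (auto simp: dist_norm norm_minus_commute)
    moreover have "norm (h *\<^sub>R b) \<le> norm b" using that(2) by (auto intro: mult_left_le_one_le)
    moreover have "norm x \<le> norm (x + h *\<^sub>R b - c) + norm (h *\<^sub>R b) + norm c"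
      using norm_triangle_ineq[of "x + h *\<^sub>R b - c - h *\<^sub>R b" c] norm_triangle_ineq4[of "x + h *\<^sub>R b - c" "h *\<^sub>R b"]
      by simp
    ultimately have "norm x \<le> R" unfolding R_def by linarith
    then show False using that(1) by simp
  qed
  have outK: "x \<notin> K" if "x \<notin> cball 0 R" for x using outR[of x 0] that by simp
  have Fm: "F \<in> borel_measurable borel" "DF \<in> borel_measurable borel"
    using Fc DFc by (auto intro: borel_measurable_continuous_onI)
  have Fint: "integrable lborel F" by (rule integrable_cc[OF Fc K F0])
  define S where "S = {0..1::real} \<times> cball (0::'a) R"
  have S: "compact S" unfolding S_def by (intro compact_Times) auto
  have "integrable lborel (\<lambda>p::real\<times>'a. indicator S p *\<^sub>R DF (snd p + fst p *\<^sub>R b))"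
    by (rule borel_integrable_compact[OF S])
       (rule continuous_on_compose2[OF DFc], auto intro!: continuous_intros)
  moreover have "(\<lambda>(h, x). indicator S (h, x) * DF (x + h *\<^sub>R b)) =
      (\<lambda>p::real\<times>'a. indicator S p *\<^sub>R DF (snd p + fst p *\<^sub>R b))" by auto
  ultimately have int2: "integrable (lborel \<Otimes>\<^sub>M lborel) (\<lambda>(h, x). indicator S (h, x) * DF (x + h *\<^sub>R b))"
    by (simp add: lborel_prod)
  have inner1: "(LBINT h. indicator S (h, x) * DF (x + h *\<^sub>R b)) = F (b + x) - F x" for x
  proof (cases "x \<in> cball 0 R")
    case True
    have "(LBINT h. indicator S (h, x) * DF (x + h *\<^sub>R b)) = (LBINT h. indicator {0..1} h *\<^sub>R DF (x + h *\<^sub>R b))"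
      using True by (intro Bochner_Integration.integral_cong) (auto simp: S_def indicator_def)
    also have "\<dots> = F (x + 1 *\<^sub>R b) - F (x + 0 *\<^sub>R b)"
    proof (rule integral_FTC_atLeastAtMost[where F="\<lambda>h. F (x + h *\<^sub>R b)"])
      fix h :: real
      show "((\<lambda>h. F (x + h *\<^sub>R b)) has_vector_derivative DF (x + h *\<^sub>R b)) (at h within {0..1})"
        using line_deriv[of UNIV F b DF x h] D
        by (simp add: has_real_derivative_iff_has_vector_derivative has_vector_derivative_at_within)
    next
      show "continuous_on {0..1} (\<lambda>h. DF (x + h *\<^sub>R b))"
        by (rule continuous_on_compose2[OF DFc]) (auto intro!: continuous_intros)
    qed simp
    finally show ?thesis by (simp add: add.commute)
  next
    case False
    then have "F (b + x) = 0" "F x = 0" using outR[of x 1] outK[of x] F0 by (auto simp: add.commute)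
    moreover have "(\<lambda>h. indicator S (h, x) * DF (x + h *\<^sub>R b)) = (\<lambda>h::real. 0::real)"
      using False by (auto simp: S_def indicator_def fun_eq_iff)
    ultimately show ?thesis by simp
  qed
  have inner2: "(LBINT x. indicator S (h, x) * DF (x + h *\<^sub>R b)) = indicator {0..1} h * integral\<^sup>L lborel DF" for h
  proof (cases "h \<in> {0..1}")
    case True
    have "(LBINT x. indicator S (h, x) * DF (x + h *\<^sub>R b)) = (LBINT x. DF (h *\<^sub>R b + x))"
      using True outR DF0 by (intro Bochner_Integration.integral_cong) (auto simp: S_def indicator_def add.commute)
    also have "\<dots> = integral\<^sup>L lborel DF" by (rule integral_translate[OF Fm(2)])
    finally show ?thesis using True by simp
  next
    case False
    then have "(\<lambda>x. indicator S (h, x) * DF (x + h *\<^sub>R b)) = (\<lambda>x::'a. 0::real)"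
      by (auto simp: S_def indicator_def fun_eq_iff)
    then show ?thesis using False by simp
  qed
  have "(LBINT x. LBINT h. indicator S (h, x) * DF (x + h *\<^sub>R b)) =
        (LBINT h. LBINT x. indicator S (h, x) * DF (x + h *\<^sub>R b))"
    using lborel_pair.Fubini_integral[OF int2] by simp
  then have "(LBINT x. F (b + x) - F x) = (LBINT h. indicator {0..1::real} h * integral\<^sup>L lborel DF)"
    by (simp only: inner1 inner2)
  moreover have "(LBINT x. F (b + x) - F x) = 0"
    using integral_translate[OF Fm(1), of b] integrable_translate[OF Fm(1) Fint, of b] Fint by simp
  moreover have "(LBINT h. indicator {0..1::real} h * integral\<^sup>L lborel DF) = integral\<^sup>L lborel DF"
    by (simp add: mult.commute)
  ultimately show ?thesis by simp
qed



lemma time_fubini: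
  fixes e H :: "real \<Rightarrow> 'a::euclidean_space \<Rightarrow> real"
  assumes tt: "t0 \<le> t" and K: "compact K"
    and Hc: "continuous_on ({t0..t} \<times> UNIV) (\<lambda>p. H (fst p) (snd p))"
    and Hd: "\<And>s x. s \<in> {t0..t} \<Longrightarrow> ((\<lambda>s. e s x) has_real_derivative H s x) (at s within {t0..t})"
    and H0: "\<And>s x. s \<in> {t0..t} \<Longrightarrow> x \<notin> K \<Longrightarrow> H s x = 0"
    and e0: "\<And>s x. s \<in> {t0..t} \<Longrightarrow> x \<notin> K \<Longrightarrow> e s x = 0"
    and ec: "\<And>s. s \<in> {t0..t} \<Longrightarrow> continuous_on UNIV (e s)"
  shows "integral\<^sup>L lborel (e t) - integral\<^sup>L lborel (e t0) =
           integral\<^sup>L lborel (\<lambda>s. indicator {t0..t} s * integral\<^sup>L lborel (H s))"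
    and "integrable lborel (\<lambda>s. indicator {t0..t} s * integral\<^sup>L lborel (H s))"
proof -
  define S where "S = {t0..t} \<times> K"
  have S: "compact S" unfolding S_def using K by (intro compact_Times) auto
  have "integrable lborel (\<lambda>p::real\<times>'a. indicator S p *\<^sub>R H (fst p) (snd p))"
    by (rule borel_integrable_compact[OF S]) (rule continuous_on_subset[OF Hc], auto simp: S_def)
  moreover have "(\<lambda>(s, x). indicator S (s, x) * H s x) =
      (\<lambda>p::real\<times>'a. indicator S p *\<^sub>R H (fst p) (snd p))" by auto
  ultimately have int2: "integrable (lborel \<Otimes>\<^sub>M lborel) (\<lambda>(s, x). indicator S (s, x) * H s x)"
    by (simp add: lborel_prod)
  have inner1: "(LBINT s. indicator S (s, x) * H s x) = e t x - e t0 x" for x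
  proof (cases "x \<in> K")
    case True
    have "(LBINT s. indicator S (s, x) * H s x) = (LBINT s. indicator {t0..t} s *\<^sub>R H s x)"
      using True by (intro Bochner_Integration.integral_cong) (auto simp: S_def indicator_def)
    also have "\<dots> = e t x - e t0 x"
    proof (rule integral_FTC_atLeastAtMost[OF tt])
      fix s :: real assume "t0 \<le> s" "s \<le> t"
      then show "((\<lambda>s. e s x) has_vector_derivative H s x) (at s within {t0..t})"
        using Hd[of s x] by (simp add: has_real_derivative_iff_has_vector_derivative)
    next
      have "continuous_on {t0..t} (\<lambda>s. (s, x))" by (intro continuous_intros)
      then show "continuous_on {t0..t} (\<lambda>s. H s x)"
        using continuous_on_compose2[OF Hc, of "{t0..t}" "\<lambda>s. (s, x)"] by auto
    qed
    finally show ?thesis .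
  next
    case False
    then have "(\<lambda>s. indicator S (s, x) * H s x) = (\<lambda>s::real. 0::real)"
      by (auto simp: S_def indicator_def fun_eq_iff)
    then show ?thesis using False e0[of t x] e0[of t0 x] tt by simp
  qed
  have inner2: "(LBINT x. indicator S (s, x) * H s x) = indicator {t0..t} s * integral\<^sup>L lborel (H s)" for s
  proof (cases "s \<in> {t0..t}")
    case True
    have "(LBINT x. indicator S (s, x) * H s x) = integral\<^sup>L lborel (H s)"
      using True H0 by (intro Bochner_Integration.integral_cong) (auto simp: S_def indicator_def)
    then show ?thesis using True by simp
  next
    case False
    then have "(\<lambda>x. indicator S (s, x) * H s x) = (\<lambda>x::'a. 0::real)"
      by (auto simp: S_def indicator_def fun_eq_iff)
    then show ?thesis using False by simp
  qed
  have "(LBINT x. LBINT s. indicator S (s, x) * H s x) =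
        (LBINT s. LBINT x. indicator S (s, x) * H s x)"
    using lborel_pair.Fubini_integral[OF int2] by simp
  then have eq: "(LBINT x. e t x - e t0 x) = (LBINT s. indicator {t0..t} s * integral\<^sup>L lborel (H s))"
    by (simp only: inner1 inner2)
  have "integrable lborel (e t)" "integrable lborel (e t0)"
    using ec e0 tt K by (auto intro!: integrable_cc)
  then show "integral\<^sup>L lborel (e t) - integral\<^sup>L lborel (e t0) =
           integral\<^sup>L lborel (\<lambda>s. indicator {t0..t} s * integral\<^sup>L lborel (H s))"
    using eq by simp
  show "integrable lborel (\<lambda>s. indicator {t0..t} s * integral\<^sup>L lborel (H s))"
    using lborel_pair.integrable_fst[OF int2] by (simp only: inner2)
qed

lemma cauchy_schwarz_integral:
  fixes f g :: "'a \<Rightarrow> real"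
  assumes "integrable M (\<lambda>x. (f x)\<^sup>2)" "integrable M (\<lambda>x. (g x)\<^sup>2)" "integrable M (\<lambda>x. f x * g x)"
  shows "integral\<^sup>L M (\<lambda>x. f x * g x) \<le> sqrt (integral\<^sup>L M (\<lambda>x. (f x)\<^sup>2)) * sqrt (integral\<^sup>L M (\<lambda>x. (g x)\<^sup>2))"
proof -
  define A where "A = integral\<^sup>L M (\<lambda>x. (f x)\<^sup>2)"
  define B where "B = integral\<^sup>L M (\<lambda>x. (g x)\<^sup>2)"
  define C where "C = integral\<^sup>L M (\<lambda>x. f x * g x)"
  have A: "A \<ge> 0" unfolding A_def by (intro integral_nonneg_AE) auto
  have B: "B \<ge> 0" unfolding B_def by (intro integral_nonneg_AE) auto
  have key: "2 * C \<le> l * A + B / l" if l: "l > 0" for l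
  proof -
    have pw: "2 * (f x * g x) \<le> l * (f x)\<^sup>2 + (g x)\<^sup>2 / l" for x
    proof -
      have "0 \<le> (l * f x - g x)\<^sup>2" by simp
      then have "2 * l * (f x * g x) \<le> l * (l * (f x)\<^sup>2) + (g x)\<^sup>2"
        by (simp add: power2_eq_square algebra_simps)
      then have "l * (2 * (f x * g x)) \<le> l * (l * (f x)\<^sup>2 + (g x)\<^sup>2 / l)"
        using l by (simp add: algebra_simps)
      then show ?thesis using l by (simp add: mult_le_cancel_left_pos)
    qed
    have "integral\<^sup>L M (\<lambda>x. 2 * (f x * g x)) \<le> integral\<^sup>L M (\<lambda>x. l * (f x)\<^sup>2 + (g x)\<^sup>2 / l)"
      using assms pw by (intro integral_mono) auto
    then show ?thesis using assms by (simp add: A_def B_def C_def)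
  qed
  show ?thesis
  proof (cases "A > 0 \<and> B > 0")
    case True
    define l where "l = sqrt B / sqrt A"
    have l: "l > 0" using True by (simp add: l_def)
    have "l * A = sqrt A * sqrt B" using True A
      by (simp add: l_def field_simps)
    moreover have "B / l = sqrt A * sqrt B" using True B
      by (simp add: l_def field_simps)
    ultimately show ?thesis using key[OF l] by (simp add: A_def B_def C_def)
  next
    case False
    then have "A = 0 \<or> B = 0" using A B by auto
    then have "C \<le> 0"
    proof
      assume A0: "A = 0"
      show "C \<le> 0"
      proof (rule ccontr)
        assume "\<not> C \<le> 0"
        then have C: "C > 0" by simp
        have "2 * C \<le> (B / C + 1) * A + B / (B / C + 1)" using key[of "B / C + 1"] B C
          by (simp add: add_nonneg_pos)
        also have "\<dots> < C" using A0 B C by (simp add: field_simps)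
        finally show False using C by simp
      qed
    next
      assume B0: "B = 0"
      show "C \<le> 0"
      proof (rule ccontr)
        assume "\<not> C \<le> 0"
        then have C: "C > 0" by simp
        have "2 * C \<le> (C / (A + 1)) * A + B / (C / (A + 1))" using key[of "C / (A + 1)"] A C
          by simp
        also have "\<dots> < C" using B0 A C by (simp add: field_simps)
        finally show False using C by simp
      qed
    qed
    then show ?thesis using A B unfolding A_def[symmetric] B_def[symmetric] C_def[symmetric] by (meson order_trans real_sqrt_ge_zero mult_nonneg_nonneg)
  qed
qed

lemma enn_integral_le:
  fixes f g :: "'a \<Rightarrow> real"
  assumes "integrable M f" "\<And>x. f x \<le> g x"
  shows "ennreal (integral\<^sup>L M f) \<le> (\<integral>\<^sup>+ x. ennreal (g x) \<partial>M)"
proof -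
  have "integral\<^sup>L M f \<le> integral\<^sup>L M (\<lambda>x. max 0 (f x))"
    using assms by (intro integral_mono integrable_max) auto
  then have "ennreal (integral\<^sup>L M f) \<le> ennreal (integral\<^sup>L M (\<lambda>x. max 0 (f x)))"
    by (rule ennreal_leI)
  also have "\<dots> = (\<integral>\<^sup>+ x. ennreal (max 0 (f x)) \<partial>M)"
    using assms by (intro nn_integral_eq_integral[symmetric] integrable_max) auto
  also have "\<dots> \<le> (\<integral>\<^sup>+ x. ennreal (g x) \<partial>M)"
    using assms by (intro nn_integral_mono) (simp add: ennreal_max_0 ennreal_leI)
  finally show ?thesis .
qed



lemma C1_D: "C1 b f \<Longrightarrow> C1d b f (\<lambda>x. deriv (\<lambda>h. f (x + h *\<^sub>R b)) 0)"
proof -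
  assume "C1 b f"
  then obtain f' where f': "C1d b f f'" unfolding C1_def by blast
  have "(\<lambda>x. deriv (\<lambda>h. f (x + h *\<^sub>R b)) 0) = f'" using C1d_deriv[OF f'] by auto
  then show ?thesis using f' by simp
qed

lemma riem_posdef: "riemannian_metric \<sigma> \<Longrightarrow> v \<noteq> 0 \<Longrightarrow> v \<bullet> (\<sigma> x *v v) > 0"
  unfolding riemannian_metric_def by blast

lemma riem_sym: "riemannian_metric \<sigma> \<Longrightarrow> transpose (\<sigma> x) = \<sigma> x"
  unfolding riemannian_metric_def by blast

lemma sig_det_pos: "riemannian_metric \<sigma> \<Longrightarrow> sig_det \<sigma> x > 0"
  unfolding sig_det_def by (rule posdef_det_pos) (rule riem_posdef)

lemma sig_inv_sym: "riemannian_metric \<sigma> \<Longrightarrow> sig_inv \<sigma> x i j = sig_inv \<sigma> x j i"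
  unfolding sig_inv_def
  by (rule matrix_inv_sym[OF riem_sym posdef_invertible]) (auto intro: riem_posdef)

lemma sig_inv_psd: "riemannian_metric \<sigma> \<Longrightarrow> 0 \<le> (\<Sum>i\<in>UNIV. \<Sum>j\<in>UNIV. sig_inv \<sigma> x i j * v $ i * v $ j)"
  unfolding sig_inv_def by (rule matrix_inv_psd) (auto intro: riem_posdef)

lemma C1_sigma:
  assumes "riemannian_metric \<sigma>" "b \<in> Basis"
  shows "C1 b (\<lambda>x. \<sigma> x $ i $ j)"
  using assms smooth_C1d[of "\<lambda>x. \<sigma> x $ i $ j" b] unfolding riemannian_metric_def C1_def by blast

lemma C1_sig_det:
  assumes "riemannian_metric \<sigma>" "b \<in> Basis"
  shows "C1 b (\<lambda>x. sig_det \<sigma> x)"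
  unfolding sig_det_def by (rule C1_det) (rule C1_sigma[OF assms])

lemma C1_w:
  assumes "riemannian_metric \<sigma>" "b \<in> Basis"
  shows "C1 b (\<lambda>x. sqrt (sig_det \<sigma> x))"
  by (rule C1_sqrt[OF C1_sig_det[OF assms]]) (rule sig_det_pos[OF assms(1)])

lemma C1_sig_inv:
  assumes "riemannian_metric \<sigma>" "b \<in> Basis"
  shows "C1 b (\<lambda>x. sig_inv \<sigma> x i j)"
proof -
  have "sig_inv \<sigma> x i j = det (\<chi> r c. if c = i then axis j 1 $ r else \<sigma> x $ r $ c) / sig_det \<sigma> x" for x
    unfolding sig_inv_def sig_det_def
    by (rule matrix_inv_cramer) (use sig_det_pos[OF assms(1), of x] in \<open>simp add: sig_det_def\<close>)
  moreover have "C1 b (\<lambda>x. det (\<chi> r c. if c = i then axis j 1 $ r else \<sigma> x $ r $ c) / sig_det \<sigma> x)"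
  proof (rule C1_divide[OF C1_det C1_sig_det[OF assms]])
    fix r c show "C1 b (\<lambda>x. (\<chi> r c. if c = i then axis j 1 $ r else \<sigma> x $ r $ c) $ r $ c)"
      by (cases "c = i") (simp_all add: C1_const C1_sigma[OF assms])
  next
    fix x show "sig_det \<sigma> x \<noteq> 0" using sig_det_pos[OF assms(1), of x] by simp
  qed
  ultimately show ?thesis by simp
qed

lemma sym_sum:
  fixes S A B :: "'n::finite \<Rightarrow> real"
  shows "(\<And>i j. M i j = M j i) \<Longrightarrow>
    (\<Sum>i\<in>UNIV. \<Sum>j\<in>UNIV. M i j * (A i * B j + B i * A j)) = 2 * (\<Sum>i\<in>UNIV. \<Sum>j\<in>UNIV. M i j * A i * B j)"
proof -
  assume sym: "\<And>i j. M i j = M j i"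
  have "(\<Sum>i\<in>UNIV. \<Sum>j\<in>UNIV. M i j * (B i * A j)) = (\<Sum>j\<in>UNIV. \<Sum>i\<in>UNIV. M i j * (B i * A j))"
    by (rule sum.swap)
  also have "\<dots> = (\<Sum>i\<in>UNIV. \<Sum>j\<in>UNIV. M i j * A i * B j)"
    by (simp add: sym mult.commute mult.left_commute)
  finally have "(\<Sum>i\<in>UNIV. \<Sum>j\<in>UNIV. M i j * (B i * A j)) = (\<Sum>i\<in>UNIV. \<Sum>j\<in>UNIV. M i j * A i * B j)" .
  then show ?thesis
    by (simp add: distrib_left sum.distrib mult.assoc)
qed

lemma quad_bound:
  fixes M E0 G k :: real
  assumes "M \<ge> 0" "E0 \<ge> 0" "G \<ge> 0" "k \<ge> 0" "M\<^sup>2 \<le> E0 + k * M * G"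
  shows "M \<le> sqrt E0 + k * G"
proof (rule ccontr)
  assume "\<not> M \<le> sqrt E0 + k * G"
  then have lt: "sqrt E0 + k * G < M" by simp
  have "M * sqrt E0 \<ge> sqrt E0 * sqrt E0"
    using lt assms by (intro mult_right_mono) (auto intro: add_nonneg_nonneg order_trans[of _ "sqrt E0 + k * G"])
  then have "M * sqrt E0 \<ge> E0" using assms by simp
  have "M * (sqrt E0 + k * G) < M * M"
    using lt assms by (intro mult_strict_left_mono) (auto, smt (verit) real_sqrt_ge_zero mult_nonneg_nonneg)
  then have "M * sqrt E0 + k * M * G < M\<^sup>2" by (simp add: algebra_simps power2_eq_square)
  then show False using \<open>M * sqrt E0 \<ge> E0\<close> assms(5) by linarith
qed



locale wave =
  fixes a :: "real \<Rightarrow> real" and \<sigma> :: "real^'n \<Rightarrow> real^'n^'n" and t0 T :: real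
    and \<phi> :: "real \<Rightarrow> real^'n \<Rightarrow> real" and U :: "(real \<times> (real^'n)) set" and K :: "(real^'n) set"
  assumes t0_pos: "t0 > 0"
    and a_smooth: "smooth_on {0<..} a"
    and a_pos: "\<And>t. t \<ge> t0 \<Longrightarrow> a t > 0"
    and a_incr: "\<And>t. t \<ge> t0 \<Longrightarrow> deriv a t > 0"
    and sigma_riem: "riemannian_metric \<sigma>"
    and T: "t0 < T"
    and U_open: "open U" and U_sub: "{t0..<T} \<times> UNIV \<subseteq> U"
    and phi_smooth: "smooth_on U (\<lambda>(t, x). \<phi> t x)"
    and K_compact: "compact K" and phi_K: "\<And>t x. t \<in> {t0..<T} \<Longrightarrow> x \<notin> K \<Longrightarrow> \<phi> t x = 0"
begin

definition Phi :: "real \<times> (real^'n) \<Rightarrow> real" where "Phi = (\<lambda>(t, x). \<phi> t x)"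

abbreviation e0 :: "real \<times> (real^'n)" where "e0 \<equiv> (1, 0)"
abbreviation ei :: "'n \<Rightarrow> real \<times> (real^'n)" where "ei i \<equiv> (0, axis i 1)"
abbreviation P :: "(real \<times> (real^'n)) list \<Rightarrow> real \<Rightarrow> real^'n \<Rightarrow> real" where
  "P bs s x \<equiv> iter_pd bs Phi (s, x)"

lemma e0_Basis: "e0 \<in> Basis" by (simp add: Basis_prod_def)
lemma ei_Basis: "ei i \<in> Basis" by (simp add: Basis_prod_def axis_in_Basis_iff)

lemma Phi_smooth: "smooth_on U Phi" using phi_smooth unfolding Phi_def .

lemma inU: "s \<in> {t0..<T} \<Longrightarrow> (s, x) \<in> U" using U_sub by blast

lemma pdir_e0: "pdir e0 F (s, x) = deriv (\<lambda>s'. F (s', x)) s"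
  unfolding pdir_def using deriv_shift0[of "\<lambda>s'. F (s', x)" s] by simp

lemma pdir_ei: "pdir (ei i) F (s, x) = dxi i (\<lambda>y. F (s, y)) x"
  unfolding pdir_def dxi_def by simp

lemma P_nil: "P [] s x = \<phi> s x" by (simp add: Phi_def)

lemma dt_P: "dt \<phi> s x = P [e0] s x"
  by (simp add: pdir_e0 dt_def Phi_def)

lemma dtdt_P: "dt (dt \<phi>) s x = P [e0, e0] s x"
  by (simp add: pdir_e0 dt_def[of "dt \<phi>"] dt_P)

lemma dxi_P: "dxi i (\<phi> s) x = P [ei i] s x"
  by (simp add: pdir_ei Phi_def)

lemma dxidxi_P: "dxi i (\<lambda>y. dxi j (\<phi> s) y) x = P [ei i, ei j] s x"
  by (simp add: pdir_ei dxi_P)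

lemma P_dt:
  assumes "(s, x) \<in> U" "set bs \<subseteq> Basis"
  shows "((\<lambda>s'. P bs s' x) has_real_derivative P (e0 # bs) s x) (at s)"
proof -
  have "((\<lambda>h. iter_pd bs Phi ((s, x) + h *\<^sub>R e0)) has_real_derivative P (e0 # bs) s x) (at 0)"
    by (rule smooth_on_deriv[OF Phi_smooth assms(2) e0_Basis assms(1)])
  then have "((\<lambda>h. (\<lambda>s'. P bs s' x) (h + s)) has_real_derivative P (e0 # bs) s x) (at 0)"
    by (simp add: add.commute)
  then show ?thesis using DERIV_shift[of "\<lambda>s'. P bs s' x" _ 0 s] by simp
qed

lemma P_dx:
  assumes "(s, x) \<in> U" "set bs \<subseteq> Basis"
  shows "((\<lambda>h. P bs s (x + h *\<^sub>R axis i 1)) has_real_derivative P (ei i # bs) s x) (at 0)"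
proof -
  have "((\<lambda>h. iter_pd bs Phi ((s, x) + h *\<^sub>R ei i)) has_real_derivative P (ei i # bs) s x) (at 0)"
    by (rule smooth_on_deriv[OF Phi_smooth assms(2) ei_Basis assms(1)])
  then show ?thesis by simp
qed

lemma P_cont_U: "set bs \<subseteq> Basis \<Longrightarrow> continuous_on U (iter_pd bs Phi)"
  by (rule smooth_on_cont[OF Phi_smooth])

lemma P_cont_x:
  assumes "s \<in> {t0..<T}" "set bs \<subseteq> Basis"
  shows "continuous_on UNIV (\<lambda>x. P bs s x)"
proof -
  have "continuous_on UNIV (\<lambda>x::real^'n. (s, x))" by (intro continuous_intros)
  moreover have "(\<lambda>x::real^'n. (s, x)) ` UNIV \<subseteq> U" using inU[OF assms(1)] by auto
  ultimately show ?thesis using continuous_on_compose2[OF P_cont_U[OF assms(2)]] by blast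
qed

lemma P_cont_joint:
  assumes "t < T" "set bs \<subseteq> Basis"
  shows "continuous_on ({t0..t} \<times> UNIV) (\<lambda>p. P bs (fst p) (snd p))"
proof -
  have "{t0..t} \<times> UNIV \<subseteq> U" using assms(1) U_sub by auto
  then show ?thesis using continuous_on_subset[OF P_cont_U[OF assms(2)]] by simp
qed

lemma P_van_nil: "s \<in> {t0..<T} \<Longrightarrow> x \<notin> K \<Longrightarrow> P [] s x = 0"
  using phi_K by (simp add: Phi_def)

lemma P_van_t:
  assumes "set bs \<subseteq> Basis" "\<And>s x. s \<in> {t0..<T} \<Longrightarrow> x \<notin> K \<Longrightarrow> P bs s x = 0"
    "s \<in> {t0..<T}" "x \<notin> K"
  shows "P (e0 # bs) s x = 0"
  by (rule deriv_zero_right[OF P_dt[OF inU[OF assms(3)] assms(1)], of T])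
     (use assms in auto)

lemma P_van_x:
  assumes "set bs \<subseteq> Basis" "\<And>s x. s \<in> {t0..<T} \<Longrightarrow> x \<notin> K \<Longrightarrow> P bs s x = 0"
    "s \<in> {t0..<T}" "x \<notin> K"
  shows "P (ei i # bs) s x = 0"
  using DERIV_unique[OF P_dx[OF inU[OF assms(3)] assms(1)]
      deriv_zero_closed[OF compact_imp_closed[OF K_compact] assms(4), of "\<lambda>y. P bs s y"]]
    assms by auto

lemma P_swap:
  assumes "(s, x) \<in> U"
  shows "P [e0, ei i] s x = P [ei i, e0] s x"
proof -
  have "iter_pd [ei i, e0] Phi (s, x) = iter_pd [e0, ei i] Phi (s, x)"
  proof (rule schwarz[OF U_open assms, of Phi e0 "iter_pd [e0] Phi" "ei i" "iter_pd [ei i] Phi"])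
    fix q assume q: "q \<in> U"
    show "((\<lambda>h. Phi (q + h *\<^sub>R e0)) has_real_derivative iter_pd [e0] Phi q) (at 0)"
      using smooth_on_deriv[OF Phi_smooth _ e0_Basis q, of "[]"] by simp
    show "((\<lambda>h. Phi (q + h *\<^sub>R ei i)) has_real_derivative iter_pd [ei i] Phi q) (at 0)"
      using smooth_on_deriv[OF Phi_smooth _ ei_Basis q, of "[]"] by simp
    show "((\<lambda>h. iter_pd [e0] Phi (q + h *\<^sub>R ei i)) has_real_derivative iter_pd [ei i, e0] Phi q) (at 0)"
      using smooth_on_deriv[OF Phi_smooth _ ei_Basis q, of "[e0]"] e0_Basis by simp
    show "((\<lambda>h. iter_pd [ei i] Phi (q + h *\<^sub>R e0)) has_real_derivative iter_pd [e0, ei i] Phi q) (at 0)"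
      using smooth_on_deriv[OF Phi_smooth _ e0_Basis q, of "[ei i]"] ei_Basis by simp
  next
    show "isCont (iter_pd [ei i, e0] Phi) (s, x)" "isCont (iter_pd [e0, ei i] Phi) (s, x)"
      using P_cont_U[of "[ei i, e0]"] P_cont_U[of "[e0, ei i]"] e0_Basis ei_Basis assms U_open
      by (auto simp: continuous_on_eq_continuous_at)
  qed
  then show ?thesis by simp
qed

lemma a_deriv_gen: "s > 0 \<Longrightarrow> ((\<lambda>h. a (s + h)) has_real_derivative deriv a s) (at 0)"
proof -
  assume s: "s > 0"
  have "((\<lambda>h. iter_pd [] a (s + h *\<^sub>R 1)) has_real_derivative iter_pd [1] a s) (at 0)"
    by (rule smooth_on_deriv[OF a_smooth]) (use s in auto)
  moreover have "iter_pd [1] a s = deriv a s"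
    by (simp add: pdir_def deriv_shift0)
  ultimately show ?thesis by simp
qed

lemma a_deriv: "s > 0 \<Longrightarrow> (a has_real_derivative deriv a s) (at s)"
proof -
  assume s: "s > 0"
  have "((\<lambda>h. a (h + s)) has_real_derivative deriv a s) (at 0)"
    using a_deriv_gen[OF s] by (simp add: add.commute)
  then show ?thesis using DERIV_shift[of a _ 0 s] by simp
qed

lemma a_cont: "continuous_on {0<..} a"
  using smooth_on_cont[OF a_smooth, of "[]"] by simp

lemma a'_cont: "continuous_on {0<..} (deriv a)"
proof -
  have "iter_pd [1] a = deriv a"
    by (rule ext) (simp add: pdir_def deriv_shift0)
  then show ?thesis using smooth_on_cont[OF a_smooth, of "[1]"] by simp
qed

end


declare iter_pd.simps[simp del]

lemma iter_pd_nil[simp]: "iter_pd [] f = f" by (simp add: iter_pd.simps)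

context wave begin

definition w :: "real^'n \<Rightarrow> real" where "w x = sqrt (sig_det \<sigma> x)"
definition G :: "'n \<Rightarrow> real \<Rightarrow> real^'n \<Rightarrow> real" where
  "G i s y = (\<Sum>j\<in>UNIV. sig_inv \<sigma> y i j * sqrt (sig_det \<sigma> y) * P [ei j] s y)"
definition DG :: "'n \<Rightarrow> real \<Rightarrow> real^'n \<Rightarrow> real" where
  "DG i s x = dxi i (G i s) x"

lemma axis_Basis: "axis i (1::real) \<in> (Basis :: (real^'n) set)"
  by (simp add: axis_in_Basis_iff)

lemma w_pos: "w x > 0" unfolding w_def using sig_det_pos[OF sigma_riem] by simp

lemma w_cont: "continuous_on UNIV w"
  unfolding w_def using C1_cont[OF C1_w[OF sigma_riem axis_Basis]] .

lemma sig_inv_cont: "continuous_on UNIV (\<lambda>x. sig_inv \<sigma> x i j)"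
  using C1_cont[OF C1_sig_inv[OF sigma_riem axis_Basis]] .

lemma C1d_P:
  assumes "s \<in> {t0..<T}" "set bs \<subseteq> Basis"
  shows "C1d (axis i 1) (\<lambda>y. P bs s y) (\<lambda>y. P (ei i # bs) s y)"
  unfolding C1d_def using P_cont_x[OF assms(1) assms(2)] P_cont_x[OF assms(1), of "ei i # bs"] assms(2) ei_Basis
    P_dx[OF inU[OF assms(1)] assms(2)]
  by auto

lemma C1_G:
  assumes "s \<in> {t0..<T}"
  shows "C1 (axis i 1) (G i s)"
proof -
  have "C1 (axis i 1) (\<lambda>y. \<Sum>j\<in>UNIV. sig_inv \<sigma> y i j * sqrt (sig_det \<sigma> y) * P [ei j] s y)"
    using C1d_P[OF assms, of "[ei j]" i for j] ei_Basis
    by (intro C1_sum C1_mult C1_sig_inv[OF sigma_riem axis_Basis] C1_w[OF sigma_riem axis_Basis])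
       (auto simp: C1_def)
  then show ?thesis unfolding G_def[abs_def] .
qed

lemma C1d_G:
  assumes "s \<in> {t0..<T}"
  shows "C1d (axis i 1) (G i s) (DG i s)"
proof -
  have "(\<lambda>x. deriv (\<lambda>h. G i s (x + h *\<^sub>R axis i 1)) 0) = DG i s"
    by (rule ext) (simp add: DG_def dxi_def)
  then show ?thesis using C1_D[OF C1_G[OF assms, of i]] by simp
qed

lemma Phi_van: "s \<in> {t0..<T} \<Longrightarrow> x \<notin> K \<Longrightarrow> Phi (s, x) = 0"
  using P_van_nil by simp

lemma Pi_van: "s \<in> {t0..<T} \<Longrightarrow> x \<notin> K \<Longrightarrow> P [ei j] s x = 0"
  by (rule P_van_x[of "[]"]) (auto simp: Phi_van iter_pd.simps)

lemma Pt_van: "s \<in> {t0..<T} \<Longrightarrow> x \<notin> K \<Longrightarrow> P [e0] s x = 0"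
  by (rule P_van_t[of "[]"]) (auto simp: Phi_van iter_pd.simps)

lemma Ptt_van: "s \<in> {t0..<T} \<Longrightarrow> x \<notin> K \<Longrightarrow> P [e0, e0] s x = 0"
  by (rule P_van_t[of "[e0]"]) (auto simp: Pt_van e0_Basis)

lemma G_van: "s \<in> {t0..<T} \<Longrightarrow> x \<notin> K \<Longrightarrow> G i s x = 0"
  by (simp add: G_def Pi_van)

lemma DG_van:
  assumes "s \<in> {t0..<T}" "x \<notin> K"
  shows "DG i s x = 0"
proof -
  have "((\<lambda>h. G i s (x + h *\<^sub>R axis i 1)) has_real_derivative DG i s x) (at 0)"
    using C1d_G[OF assms(1)] unfolding C1d_def by blast
  moreover have "((\<lambda>h. G i s (x + h *\<^sub>R axis i 1)) has_real_derivative 0) (at 0)"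
    by (rule deriv_zero_closed[OF compact_imp_closed[OF K_compact] assms(2)]) (use G_van assms in auto)
  ultimately show ?thesis by (rule DERIV_unique)
qed

lemma box_eq:
  "box_g a \<sigma> \<phi> s x = - P [e0, e0] s x - real CARD('n) * (deriv a s / a s) * P [e0] s x
     + (1 / (a s)\<^sup>2) * ((1 / w x) * (\<Sum>i\<in>UNIV. DG i s x))"
  by (simp add: box_g_def lap_sigma_def dtdt_P dt_P dxi_P DG_def G_def[abs_def] w_def)

lemma a_ne0: "s \<in> {t0..<T} \<Longrightarrow> a s \<noteq> 0" using a_pos[of s] by force

lemma w_ne0: "w x \<noteq> 0" using w_pos[of x] by simp

lemma box_cont:
  assumes "s \<in> {t0..<T}"
  shows "continuous_on UNIV (box_g a \<sigma> \<phi> s)"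
proof -
  have "continuous_on UNIV (\<lambda>x. - P [e0, e0] s x - real CARD('n) * (deriv a s / a s) * P [e0] s x
     + (1 / (a s)\<^sup>2) * ((1 / w x) * (\<Sum>i\<in>UNIV. DG i s x)))"
    using P_cont_x[OF assms, of "[e0, e0]"] P_cont_x[OF assms, of "[e0]"] e0_Basis
      C1d_cont[OF C1d_G[OF assms]] w_cont w_ne0 C1d_G[OF assms]
    by (intro continuous_intros continuous_on_sum) (auto simp: C1d_def)
  then show ?thesis by (simp add: box_eq[abs_def])
qed

lemma box_van: "s \<in> {t0..<T} \<Longrightarrow> x \<notin> K \<Longrightarrow> box_g a \<sigma> \<phi> s x = 0"
  by (simp add: box_eq Ptt_van Pt_van DG_van)

end


context wave begin

definition ed :: "real \<Rightarrow> real^'n \<Rightarrow> real" where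
  "ed s x = ((a s)\<^sup>2 * (P [e0] s x)\<^sup>2
     + (\<Sum>i\<in>UNIV. \<Sum>j\<in>UNIV. sig_inv \<sigma> x i j * P [ei i] s x * P [ei j] s x)) * sqrt (sig_det \<sigma> x)"

definition H :: "real \<Rightarrow> real^'n \<Rightarrow> real" where
  "H s x = (2 * a s * deriv a s * (P [e0] s x)\<^sup>2 + (a s)\<^sup>2 * (2 * P [e0] s x * P [e0, e0] s x)
     + (\<Sum>i\<in>UNIV. \<Sum>j\<in>UNIV. sig_inv \<sigma> x i j *
          (P [e0, ei i] s x * P [ei j] s x + P [ei i] s x * P [e0, ei j] s x))) * sqrt (sig_det \<sigma> x)"

definition DF :: "'n \<Rightarrow> real \<Rightarrow> real^'n \<Rightarrow> real" where
  "DF i s y = P [ei i, e0] s y * G i s y + P [e0] s y * DG i s y"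

lemma energy_eq: "energy a \<sigma> \<phi> s = 1/2 * integral\<^sup>L lborel (ed s)"
  by (simp add: energy_def dt_P dxi_P ed_def[abs_def])

lemma int_K: "continuous_on UNIV (f :: real^'n \<Rightarrow> real) \<Longrightarrow> (\<And>x. x \<notin> K \<Longrightarrow> f x = 0) \<Longrightarrow> integrable lborel f"
  by (rule integrable_cc[OF _ K_compact])

lemma DF_int_zero:
  assumes s: "s \<in> {t0..<T}"
  shows "integral\<^sup>L lborel (DF i s) = 0"
proof (rule integral_partial_zero[OF K_compact, where F="\<lambda>y. P [e0] s y * G i s y" and b="axis i 1"])
  have c1: "C1d (axis i 1) (\<lambda>y. P [e0] s y * G i s y) (DF i s)"
    using C1d_mult[OF C1d_P[OF s, of "[e0]" i] C1d_G[OF s, of i]] e0_Basis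
    by (simp add: DF_def[abs_def] mult.commute)
  show "continuous_on UNIV (\<lambda>y. P [e0] s y * G i s y)" using c1 unfolding C1d_def by blast
  show "continuous_on UNIV (DF i s)" using c1 unfolding C1d_def by blast
  show "((\<lambda>h. P [e0] s (x + h *\<^sub>R axis i 1) * G i s (x + h *\<^sub>R axis i 1)) has_real_derivative DF i s x) (at 0)" for x
    using c1 unfolding C1d_def by blast
  show "P [e0] s x * G i s x = 0" if "x \<notin> K" for x using Pt_van[OF s that] by simp
qed

lemma H_id:
  assumes s: "s \<in> {t0..<T}"
  shows "H s x = (2 - 2 * real CARD('n)) * a s * deriv a s * (P [e0] s x)\<^sup>2 * w x
     - 2 * (a s)\<^sup>2 * P [e0] s x * box_g a \<sigma> \<phi> s x * w x + 2 * (\<Sum>i\<in>UNIV. DF i s x)"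
proof -
  have sw: "P [e0, ei i] s x = P [ei i, e0] s x" for i using P_swap[OF inU[OF s]] .
  have Q: "(\<Sum>i\<in>UNIV. \<Sum>j\<in>UNIV. sig_inv \<sigma> x i j *
          (P [e0, ei i] s x * P [ei j] s x + P [ei i] s x * P [e0, ei j] s x))
      = 2 * (\<Sum>i\<in>UNIV. \<Sum>j\<in>UNIV. sig_inv \<sigma> x i j * P [ei i, e0] s x * P [ei j] s x)"
    unfolding sw by (rule sym_sum) (rule sig_inv_sym[OF sigma_riem])
  have SG: "(\<Sum>i\<in>UNIV. P [ei i, e0] s x * G i s x)
      = (\<Sum>i\<in>UNIV. \<Sum>j\<in>UNIV. sig_inv \<sigma> x i j * P [ei i, e0] s x * P [ei j] s x) * w x"
    by (simp add: G_def w_def sum_distrib_left sum_distrib_right mult_ac)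
  have SDF: "(\<Sum>i\<in>UNIV. DF i s x) = (\<Sum>i\<in>UNIV. P [ei i, e0] s x * G i s x) + P [e0] s x * (\<Sum>i\<in>UNIV. DG i s x)"
    by (simp add: DF_def sum.distrib sum_distrib_left)
  have an: "a s \<noteq> 0" using a_ne0[OF s] .
  have wn: "w x \<noteq> 0" using w_ne0 .
  show ?thesis
    unfolding H_def Q SDF SG box_eq w_def[symmetric]
    using an wn by (simp add: field_simps power2_eq_square)
qed

end


context wave begin

lemma D_bound:
  assumes s: "s \<in> {t0..<T}"
  shows "integral\<^sup>L lborel (H s) \<le> 2 * a s * sqrt (2 * energy a \<sigma> \<phi> s) * L2_sigma \<sigma> (box_g a \<sigma> \<phi> s)"
proof -
  let ?n = "real CARD('n)"
  let ?b = "box_g a \<sigma> \<phi> s"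
  have cP0: "continuous_on UNIV (\<lambda>x. P [e0] s x)" using P_cont_x[OF s, of "[e0]"] e0_Basis by simp
  have cPi: "continuous_on UNIV (\<lambda>x. P [ei i] s x)" for i using P_cont_x[OF s, of "[ei i]"] ei_Basis by simp
  have cPit: "continuous_on UNIV (\<lambda>x. P [ei i, e0] s x)" for i
    using P_cont_x[OF s, of "[ei i, e0]"] ei_Basis e0_Basis by simp
  have cb: "continuous_on UNIV ?b" by (rule box_cont[OF s])
  have csw: "continuous_on UNIV (\<lambda>x. sqrt (w x))" using w_cont by (intro continuous_intros)
  have cG: "continuous_on UNIV (G i s)" for i using C1d_cont[OF C1d_G[OF s, of i]] .
  have cDG: "continuous_on UNIV (DG i s)" for i using C1d_G[OF s, of i] unfolding C1d_def by blast
  have cDF: "continuous_on UNIV (DF i s)" for i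
    unfolding DF_def[abs_def] using cPit cG cP0 cDG by (intro continuous_intros)
  have csi: "continuous_on UNIV (\<lambda>x. sig_inv \<sigma> x i j)" for i j by (rule sig_inv_cont)
  have ced: "continuous_on UNIV (ed s)"
    unfolding ed_def[abs_def] w_def[symmetric]
    using cP0 cPi csi w_cont by (intro continuous_intros continuous_on_sum)
  define f1 where "f1 x = (2 - 2 * ?n) * a s * deriv a s * (P [e0] s x)\<^sup>2 * w x" for x
  define f2 where "f2 x = 2 * (a s)\<^sup>2 * P [e0] s x * ?b x * w x" for x
  define f3 where "f3 x = 2 * (\<Sum>i\<in>UNIV. DF i s x)" for x
  define u where "u x = - (a s) * P [e0] s x * sqrt (w x)" for x
  define v where "v x = ?b x * sqrt (w x)" for x
  have vanP0: "P [e0] s x = 0" if "x \<notin> K" for x using Pt_van[OF s that] .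
  have vanb: "?b x = 0" if "x \<notin> K" for x using box_van[OF s that] .
  have int1: "integrable lborel f1"
    by (rule int_K) (use cP0 w_cont vanP0 in \<open>auto simp: f1_def[abs_def] intro!: continuous_intros\<close>)
  have intDF: "integrable lborel (DF i s)" for i
    by (rule int_K[OF cDF]) (simp add: DF_def Pt_van[OF s] G_van[OF s] DG_van[OF s])
  have int3: "integrable lborel f3" unfolding f3_def[abs_def] using intDF by auto
  have intu2: "integrable lborel (\<lambda>x. (u x)\<^sup>2)"
    by (rule int_K) (use cP0 csw vanP0 in \<open>auto simp: u_def[abs_def] intro!: continuous_intros\<close>)
  have intv2: "integrable lborel (\<lambda>x. (v x)\<^sup>2)"
    by (rule int_K) (use cb csw vanb in \<open>auto simp: v_def[abs_def] intro!: continuous_intros\<close>)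
  have intuv: "integrable lborel (\<lambda>x. u x * v x)"
    by (rule int_K) (use cb cP0 csw vanb in \<open>auto simp: u_def[abs_def] v_def[abs_def] intro!: continuous_intros\<close>)
  have wsq: "sqrt (w x) * sqrt (w x) = w x" for x using w_pos[of x] by (simp add: real_sqrt_mult[symmetric])
  have f2uv: "f2 x = - (2 * a s) * (u x * v x)" for x
  proof -
    have "u x * v x = - (a s) * P [e0] s x * ?b x * (sqrt (w x) * sqrt (w x))"
      by (simp add: u_def v_def mult_ac)
    then show ?thesis using w_pos[of x] by (simp add: f2_def wsq power2_eq_square mult_ac)
  qed
  have int2: "integrable lborel f2" unfolding f2uv[abs_def] using intuv by simp
  have Heq: "H s = (\<lambda>x. f1 x - f2 x + f3 x)"
    by (rule ext) (simp add: H_id[OF s] f1_def f2_def f3_def)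
  have I3: "integral\<^sup>L lborel f3 = 0"
    unfolding f3_def[abs_def] using intDF DF_int_zero[OF s] by (simp add: integral_sum)
  have n1: "?n \<ge> 1" using finite_UNIV_card_ge_0[where 'a='n] by simp
  have f1np: "f1 x \<le> 0" for x
  proof -
    have "0 \<le> a s * deriv a s * (P [e0] s x)\<^sup>2 * w x"
      using a_pos[of s] a_incr[of s] s w_pos[of x] by (auto intro!: mult_nonneg_nonneg)
    moreover have "2 - 2 * ?n \<le> 0" using n1 by simp
    ultimately show ?thesis unfolding f1_def by (metis mult.assoc mult_nonpos_nonneg)
  qed
  have I1: "integral\<^sup>L lborel f1 \<le> 0"
  proof -
    have "integral\<^sup>L lborel f1 \<le> integral\<^sup>L lborel (\<lambda>x::real^'n. 0::real)"
      by (rule integral_mono[OF int1]) (use f1np in auto)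
    then show ?thesis by simp
  qed
  have "integral\<^sup>L lborel (H s) = integral\<^sup>L lborel f1 - integral\<^sup>L lborel f2 + integral\<^sup>L lborel f3"
    unfolding Heq using int1 int2 int3 by simp
  also have "\<dots> \<le> - integral\<^sup>L lborel f2" using I1 I3 by simp
  also have "- integral\<^sup>L lborel f2 = 2 * a s * integral\<^sup>L lborel (\<lambda>x. u x * v x)"
    unfolding f2uv by simp
  also have "\<dots> \<le> 2 * a s * (sqrt (integral\<^sup>L lborel (\<lambda>x. (u x)\<^sup>2)) * sqrt (integral\<^sup>L lborel (\<lambda>x. (v x)\<^sup>2)))"
    using cauchy_schwarz_integral[OF intu2 intv2 intuv] a_pos[of s] s
    by (intro mult_left_mono) auto
  also have "\<dots> \<le> 2 * a s * (sqrt (2 * energy a \<sigma> \<phi> s) * L2_sigma \<sigma> ?b)"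
  proof -
    have u2: "(u x)\<^sup>2 \<le> ed s x" for x
    proof -
      have "0 \<le> (\<Sum>i\<in>UNIV. \<Sum>j\<in>UNIV. sig_inv \<sigma> x i j * (\<chi> k. P [ei k] s x) $ i * (\<chi> k. P [ei k] s x) $ j)"
        by (rule sig_inv_psd[OF sigma_riem])
      then have "0 \<le> (\<Sum>i\<in>UNIV. \<Sum>j\<in>UNIV. sig_inv \<sigma> x i j * P [ei i] s x * P [ei j] s x) * w x"
        using w_pos[of x] by simp
      moreover have "(u x)\<^sup>2 = (a s)\<^sup>2 * (P [e0] s x)\<^sup>2 * w x"
        by (simp add: u_def power_mult_distrib w_pos less_imp_le)
      ultimately show ?thesis by (simp add: ed_def w_def[symmetric] algebra_simps)
    qed
    have inted: "integrable lborel (ed s)"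
      by (rule int_K[OF ced]) (simp add: ed_def Pt_van[OF s] Pi_van[OF s])
    have "integral\<^sup>L lborel (\<lambda>x. (u x)\<^sup>2) \<le> integral\<^sup>L lborel (ed s)"
      by (rule integral_mono[OF intu2 inted u2])
    also have "\<dots> = 2 * energy a \<sigma> \<phi> s" by (simp add: energy_eq)
    finally have A: "sqrt (integral\<^sup>L lborel (\<lambda>x. (u x)\<^sup>2)) \<le> sqrt (2 * energy a \<sigma> \<phi> s)" by simp
    have "(\<lambda>x. (v x)\<^sup>2) = (\<lambda>x. (?b x)\<^sup>2 * sqrt (sig_det \<sigma> x))"
      by (rule ext) (simp add: v_def power_mult_distrib w_pos less_imp_le w_def[symmetric])
    then have B: "sqrt (integral\<^sup>L lborel (\<lambda>x. (v x)\<^sup>2)) = L2_sigma \<sigma> ?b"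
      by (simp add: L2_sigma_def)
    have "sqrt (integral\<^sup>L lborel (\<lambda>x. (u x)\<^sup>2)) * sqrt (integral\<^sup>L lborel (\<lambda>x. (v x)\<^sup>2))
        \<le> sqrt (2 * energy a \<sigma> \<phi> s) * L2_sigma \<sigma> ?b"
      unfolding B by (rule mult_right_mono[OF A])
        (unfold L2_sigma_def, intro real_sqrt_ge_zero integral_nonneg_AE AE_I2 mult_nonneg_nonneg,
         auto simp: sig_det_pos[OF sigma_riem] less_imp_le)
    then show ?thesis using a_pos[of s] s by (intro mult_left_mono) auto
  qed
  finally show ?thesis by (simp add: mult_ac)
qed

end


context wave begin

lemma ed_deriv:
  assumes s: "s \<in> {t0..<T}"
  shows "((\<lambda>s. ed s x) has_real_derivative H s x) (at s)"
proof -
  have U: "(s, x) \<in> U" by (rule inU[OF s])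
  have da: "(a has_real_derivative deriv a s) (at s)" using a_deriv t0_pos s by auto
  have dP0: "((\<lambda>s. P [e0] s x) has_real_derivative P [e0, e0] s x) (at s)"
    using P_dt[OF U, of "[e0]"] e0_Basis by simp
  have dPi: "((\<lambda>s. P [ei i] s x) has_real_derivative P [e0, ei i] s x) (at s)" for i
    using P_dt[OF U, of "[ei i]"] ei_Basis by simp
  have dQ: "((\<lambda>s. \<Sum>i\<in>UNIV. \<Sum>j\<in>UNIV. sig_inv \<sigma> x i j * P [ei i] s x * P [ei j] s x) has_real_derivative
      (\<Sum>i\<in>UNIV. \<Sum>j\<in>UNIV. sig_inv \<sigma> x i j *
          (P [e0, ei i] s x * P [ei j] s x + P [ei i] s x * P [e0, ei j] s x))) (at s)"
  proof (intro DERIV_sum)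
    fix i j
    have "((\<lambda>s. sig_inv \<sigma> x i j * (P [ei i] s x * P [ei j] s x)) has_real_derivative
        sig_inv \<sigma> x i j * (P [e0, ei i] s x * P [ei j] s x + P [e0, ei j] s x * P [ei i] s x)) (at s)"
      by (intro DERIV_cmult DERIV_mult dPi)
    then show "((\<lambda>s. sig_inv \<sigma> x i j * P [ei i] s x * P [ei j] s x) has_real_derivative
        sig_inv \<sigma> x i j * (P [e0, ei i] s x * P [ei j] s x + P [ei i] s x * P [e0, ei j] s x)) (at s)"
      by (simp add: mult_ac)
  qed
  have "((\<lambda>s. ((a s)\<^sup>2 * (P [e0] s x)\<^sup>2
     + (\<Sum>i\<in>UNIV. \<Sum>j\<in>UNIV. sig_inv \<sigma> x i j * P [ei i] s x * P [ei j] s x)) * sqrt (sig_det \<sigma> x))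
     has_real_derivative
      ((2 * a s * deriv a s * (P [e0] s x)\<^sup>2 + (a s)\<^sup>2 * (2 * P [e0] s x * P [e0, e0] s x))
      + (\<Sum>i\<in>UNIV. \<Sum>j\<in>UNIV. sig_inv \<sigma> x i j *
          (P [e0, ei i] s x * P [ei j] s x + P [ei i] s x * P [e0, ei j] s x))) * sqrt (sig_det \<sigma> x)) (at s)"
  proof (intro DERIV_cmult_right DERIV_add dQ)
    have "((\<lambda>s. a s * a s * (P [e0] s x * P [e0] s x)) has_real_derivative
       (deriv a s * a s + deriv a s * a s) * (P [e0] s x * P [e0] s x)
       + (P [e0, e0] s x * P [e0] s x + P [e0, e0] s x * P [e0] s x) * (a s * a s)) (at s)"
      by (intro DERIV_mult da dP0)
    then show "((\<lambda>s. (a s)\<^sup>2 * (P [e0] s x)\<^sup>2) has_real_derivative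
       2 * a s * deriv a s * (P [e0] s x)\<^sup>2 + (a s)\<^sup>2 * (2 * P [e0] s x * P [e0, e0] s x)) (at s)"
      by (simp add: power2_eq_square algebra_simps)
  qed
  then show ?thesis by (simp add: ed_def[abs_def] H_def)
qed

lemma H_cont:
  assumes t: "t < T"
  shows "continuous_on ({t0..t} \<times> UNIV) (\<lambda>p. H (fst p) (snd p))"
proof -
  let ?S = "{t0..t} \<times> (UNIV :: (real^'n) set)"
  have sub: "fst ` ?S \<subseteq> {0<..}" using t0_pos by auto
  have ca: "continuous_on ?S (\<lambda>p. a (fst p))"
    by (rule continuous_on_compose2[OF a_cont continuous_on_fst[OF continuous_on_id] sub])
  have ca': "continuous_on ?S (\<lambda>p. deriv a (fst p))"
    by (rule continuous_on_compose2[OF a'_cont continuous_on_fst[OF continuous_on_id] sub])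
  have cP: "set bs \<subseteq> Basis \<Longrightarrow> continuous_on ?S (\<lambda>p. P bs (fst p) (snd p))" for bs
    using P_cont_joint[OF t, of bs] by blast
  have csi: "continuous_on ?S (\<lambda>p. sig_inv \<sigma> (snd p) i j)" for i j
    by (rule continuous_on_compose2[OF sig_inv_cont continuous_on_snd[OF continuous_on_id]]) auto
  have cw: "continuous_on ?S (\<lambda>p. sqrt (sig_det \<sigma> (snd p)))"
    using continuous_on_compose2[OF w_cont continuous_on_snd[OF continuous_on_id], of ?S] by (simp add: w_def)
  have cP0: "continuous_on ?S (\<lambda>p. P [e0] (fst p) (snd p))" using cP[of "[e0]"] e0_Basis by simp
  have cP00: "continuous_on ?S (\<lambda>p. P [e0, e0] (fst p) (snd p))" using cP[of "[e0, e0]"] e0_Basis by simp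
  have cPi: "continuous_on ?S (\<lambda>p. P [ei i] (fst p) (snd p))" for i using cP[of "[ei i]"] ei_Basis by simp
  have cPti: "continuous_on ?S (\<lambda>p. P [e0, ei i] (fst p) (snd p))" for i
    using cP[of "[e0, ei i]"] ei_Basis e0_Basis by simp
  show ?thesis unfolding H_def
    by (intro continuous_on_mult continuous_on_add continuous_on_sum continuous_on_power
        continuous_on_const ca ca' cP0 cP00 cPi cPti csi cw)
qed

lemma ed_cont:
  assumes s: "s \<in> {t0..<T}"
  shows "continuous_on UNIV (ed s)"
proof -
  have cP0: "continuous_on UNIV (\<lambda>x. P [e0] s x)" using P_cont_x[OF s, of "[e0]"] e0_Basis by simp
  have cPi: "continuous_on UNIV (\<lambda>x. P [ei i] s x)" for i using P_cont_x[OF s, of "[ei i]"] ei_Basis by simp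
  show ?thesis
    unfolding ed_def[abs_def] w_def[symmetric]
    using cP0 cPi sig_inv_cont w_cont by (intro continuous_intros continuous_on_sum)
qed

lemma ed_van: "s \<in> {t0..<T} \<Longrightarrow> x \<notin> K \<Longrightarrow> ed s x = 0"
  by (simp add: ed_def Pt_van Pi_van)

lemma Pti_van: "s \<in> {t0..<T} \<Longrightarrow> x \<notin> K \<Longrightarrow> P [e0, ei i] s x = 0"
  by (rule P_van_t[of "[ei i]"]) (auto simp: Pi_van ei_Basis)

lemma H_van: "s \<in> {t0..<T} \<Longrightarrow> x \<notin> K \<Longrightarrow> H s x = 0"
  by (simp add: H_def Pt_van Pi_van Ptt_van Pti_van)

lemma ed_nonneg: "ed s x \<ge> 0"
proof -
  have "0 \<le> (\<Sum>i\<in>UNIV. \<Sum>j\<in>UNIV. sig_inv \<sigma> x i j * (\<chi> k. P [ei k] s x) $ i * (\<chi> k. P [ei k] s x) $ j)"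
    by (rule sig_inv_psd[OF sigma_riem])
  then show ?thesis using w_pos[of x] unfolding ed_def w_def[symmetric]
    by (intro mult_nonneg_nonneg add_nonneg_nonneg) auto
qed

lemma energy_nonneg: "energy a \<sigma> \<phi> s \<ge> 0"
  unfolding energy_eq using ed_nonneg by (simp add: integral_nonneg_AE)

lemma energy_identity:
  assumes t: "t \<in> {t0..<T}"
  shows "energy a \<sigma> \<phi> t - energy a \<sigma> \<phi> t0 =
           1/2 * integral\<^sup>L lborel (\<lambda>s. indicator {t0..t} s * integral\<^sup>L lborel (H s))"
    and "integrable lborel (\<lambda>s. indicator {t0..t} s * integral\<^sup>L lborel (H s))"
proof -
  have tt: "t0 \<le> t" "t < T" using t by auto
  have sub: "s \<in> {t0..t} \<Longrightarrow> s \<in> {t0..<T}" for s using tt by auto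
  note tf = time_fubini[OF tt(1) K_compact H_cont[OF tt(2)], of ed]
  have hyps: "\<And>s x. s \<in> {t0..t} \<Longrightarrow> ((\<lambda>s. ed s x) has_real_derivative H s x) (at s within {t0..t})"
    "\<And>s x. s \<in> {t0..t} \<Longrightarrow> x \<notin> K \<Longrightarrow> H s x = 0"
    "\<And>s x. s \<in> {t0..t} \<Longrightarrow> x \<notin> K \<Longrightarrow> ed s x = 0"
    "\<And>s. s \<in> {t0..t} \<Longrightarrow> continuous_on UNIV (ed s)"
    using ed_deriv[OF sub] H_van[OF sub] ed_van[OF sub] ed_cont[OF sub]
    by (auto intro: has_field_derivative_at_within)
  show "integrable lborel (\<lambda>s. indicator {t0..t} s * integral\<^sup>L lborel (H s))"
    using tf(2)[OF hyps] .
  show "energy a \<sigma> \<phi> t - energy a \<sigma> \<phi> t0 =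
           1/2 * integral\<^sup>L lborel (\<lambda>s. indicator {t0..t} s * integral\<^sup>L lborel (H s))"
    using tf(1)[OF hyps] by (simp add: energy_eq algebra_simps)
qed

end


context wave begin

lemma L2_nonneg: "L2_sigma \<sigma> f \<ge> 0"
  unfolding L2_sigma_def
  by (intro real_sqrt_ge_zero integral_nonneg_AE AE_I2 mult_nonneg_nonneg)
     (auto simp: sig_det_pos[OF sigma_riem] less_imp_le)

lemma final:
  assumes t: "t \<in> {t0..<T}"
  shows "ennreal (sqrt (energy a \<sigma> \<phi> t)) \<le> ennreal 2 * (ennreal (sqrt (energy a \<sigma> \<phi> t0))
            + (\<integral>\<^sup>+ s\<in>{t0..<T}. ennreal (a s * L2_sigma \<sigma> (box_g a \<sigma> \<phi> s)) \<partial>lborel))"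
proof -
  define E where "E s = energy a \<sigma> \<phi> s" for s
  define I where "I = (\<integral>\<^sup>+ s\<in>{t0..<T}. ennreal (a s * L2_sigma \<sigma> (box_g a \<sigma> \<phi> s)) \<partial>lborel)"
  define D where "D s = integral\<^sup>L lborel (H s)" for s
  define L where "L s = L2_sigma \<sigma> (box_g a \<sigma> \<phi> s)" for s
  have E0: "E s \<ge> 0" for s unfolding E_def by (rule energy_nonneg)
  have tt: "t0 \<le> t" "t < T" using t by auto
  have sub: "s \<in> {t0..t} \<Longrightarrow> s \<in> {t0..<T}" for s using tt by auto
  show ?thesis
  proof (cases I rule: ennreal_cases)
    case top
    then show ?thesis by (simp add: I_def[symmetric] ennreal_mult_top)
  next
    case (real G)
    have ident: "E s' - E t0 = 1/2 * integral\<^sup>L lborel (\<lambda>s. indicator {t0..s'} s * D s)"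
      "integrable lborel (\<lambda>s. indicator {t0..s'} s * D s)" if "s' \<in> {t0..t}" for s'
      using energy_identity[OF sub[OF that]] unfolding E_def D_def by auto
    have Dle: "D s \<le> 2 * a s * sqrt (2 * E s) * L s" if "s \<in> {t0..<T}" for s
      using D_bound[OF that] unfolding D_def E_def L_def .
    have aL: "0 \<le> a s * L s" if "s \<ge> t0" for s
      using a_pos[OF that] L2_nonneg[of "box_g a \<sigma> \<phi> s"] by (simp add: L_def)
    define B where "B = E t0 + 1/2 * integral\<^sup>L lborel (\<lambda>s. \<bar>indicator {t0..t} s * D s\<bar>)"
    have EB: "E s' \<le> B" if s': "s' \<in> {t0..t}" for s'
    proof -
      have "integral\<^sup>L lborel (\<lambda>s. indicator {t0..s'} s * D s) \<le> integral\<^sup>L lborel (\<lambda>s. \<bar>indicator {t0..t} s * D s\<bar>)"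
        using ident(2)[OF s'] ident(2)[of t] tt s'
        by (intro integral_mono) (auto simp: indicator_def)
      then show ?thesis using ident(1)[OF s'] by (simp add: B_def)
    qed
    let ?F = "(\<lambda>s. sqrt (E s)) ` {t0..t}"
    define M where "M = Sup ?F"
    have bdd: "bdd_above ?F" using EB by (intro bdd_aboveI[where M="sqrt B"]) auto
    have Mge: "sqrt (E s) \<le> M" if "s \<in> {t0..t}" for s
      unfolding M_def using bdd that by (intro cSup_upper) auto
    have M0: "M \<ge> 0" using Mge[of t0] tt E0[of t0] by (meson atLeastAtMost_iff order_refl order_trans real_sqrt_ge_zero)
    show ?thesis
    proof (cases "M = 0")
      case True
      then have "sqrt (E t) \<le> 0" using Mge[of t] tt by auto
      then have "E t = 0" using E0[of t] by simp
      then show ?thesis by (simp add: E_def)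
    next
      case False
      then have Mp: "M > 0" using M0 by simp
      define c where "c = sqrt 2 * M"
      have c: "c > 0" using Mp by (simp add: c_def)
      have key: "E s' - E t0 \<le> c * G" if s': "s' \<in> {t0..t}" for s'
      proof -
        have "ennreal (integral\<^sup>L lborel (\<lambda>s. 1 / c * (1/2 * (indicator {t0..s'} s * D s))))
            \<le> (\<integral>\<^sup>+ s. ennreal (a s * L s * indicator {t0..<T} s) \<partial>lborel)"
        proof (rule enn_integral_le)
          show "integrable lborel (\<lambda>s. 1 / c * (1/2 * (indicator {t0..s'} s * D s)))"
            using ident(2)[OF s'] by simp
        next
          fix s
          show "1 / c * (1/2 * (indicator {t0..s'} s * D s)) \<le> a s * L s * indicator {t0..<T} s"
          proof (cases "s \<in> {t0..s'}")
            case True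
            then have sT: "s \<in> {t0..<T}" using s' tt by auto
            have "1/2 * D s \<le> a s * sqrt (2 * E s) * L s" using Dle[OF sT] by simp
            also have "\<dots> = sqrt 2 * sqrt (E s) * (a s * L s)" by (simp add: real_sqrt_mult mult_ac)
            also have "\<dots> \<le> c * (a s * L s)" unfolding c_def
              using Mge[of s] True s' aL[of s] by (intro mult_right_mono mult_left_mono) auto
            finally have "1/2 * D s \<le> c * (a s * L s)" .
            then have "1 / c * (1/2 * D s) \<le> a s * L s" using c by (simp add: field_simps)
            then show ?thesis using True sT by simp
          next
            case False
            then show ?thesis using aL[of s] by (auto simp: indicator_def)
          qed
        qed
        also have "\<dots> = I" unfolding I_def L_def
          by (intro nn_integral_cong) (auto simp: indicator_def)
        finally have "1 / c * (1/2 * integral\<^sup>L lborel (\<lambda>s. indicator {t0..s'} s * D s)) \<le> G"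
          using real by (simp add: ennreal_le_iff)
        moreover have "1 / c * (E s' - E t0) = 1 / c * (1/2 * integral\<^sup>L lborel (\<lambda>s. indicator {t0..s'} s * D s))"
          by (simp only: ident(1)[OF s'])
        ultimately have "1 / c * (E s' - E t0) \<le> G" by linarith
        then show ?thesis using c by (simp add: field_simps)
      qed
      have "Sup ?F \<le> sqrt (E t0 + sqrt 2 * M * G)"
      proof (rule cSup_least)
        show "?F \<noteq> {}" using tt by auto
      next
        fix y assume "y \<in> ?F"
        then obtain s' where s': "s' \<in> {t0..t}" "y = sqrt (E s')" by auto
        then show "y \<le> sqrt (E t0 + sqrt 2 * M * G)" using key[OF s'(1)] by (simp add: c_def)
      qed
      then have "M \<le> sqrt (E t0 + sqrt 2 * M * G)" by (simp add: M_def)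
      then have "M\<^sup>2 \<le> E t0 + sqrt 2 * M * G"
      proof -
        have X: "E t0 + sqrt 2 * M * G \<ge> 0" using E0[of t0] M0 real(1) by simp
        have "M\<^sup>2 \<le> (sqrt (E t0 + sqrt 2 * M * G))\<^sup>2"
          by (rule power_mono[OF \<open>M \<le> sqrt (E t0 + sqrt 2 * M * G)\<close> M0])
        then show ?thesis using X by simp
      qed
      then have "M \<le> sqrt (E t0) + sqrt 2 * G"
        using quad_bound[OF M0 E0 real(1), of "sqrt 2"] by simp
      moreover have "sqrt (E t) \<le> M" using Mge[of t] tt by simp
      moreover have "sqrt 2 \<le> (2::real)" using real_sqrt_le_mono[of 2 4] by simp
      ultimately have "sqrt (E t) \<le> 2 * (sqrt (E t0) + G)"
      proof -
        have "sqrt 2 * G \<le> 2 * G" using real(1) \<open>sqrt 2 \<le> 2\<close> by (rule mult_right_mono[rotated])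
        moreover have "sqrt (E t0) \<le> 2 * sqrt (E t0)" using E0[of t0] by simp
        ultimately have "sqrt (E t0) + sqrt 2 * G \<le> 2 * sqrt (E t0) + 2 * G" by (rule add_mono[rotated])
        then have "sqrt (E t) \<le> 2 * sqrt (E t0) + 2 * G"
          using \<open>M \<le> sqrt (E t0) + sqrt 2 * G\<close> \<open>sqrt (E t) \<le> M\<close> by linarith
        then show ?thesis by (simp add: distrib_left)
      qed
      then have "ennreal (sqrt (E t)) \<le> ennreal (2 * (sqrt (E t0) + G))" by (rule ennreal_leI)
      also have "\<dots> = ennreal 2 * (ennreal (sqrt (E t0)) + I)"
        using real E0[of t0] by (simp add: ennreal_mult ennreal_plus)
      finally show ?thesis by (simp add: E_def I_def)
    qed
  qed
qed

end


theorem theorem3p2: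
  fixes a :: "real \<Rightarrow> real" and \<sigma> :: "real^'n \<Rightarrow> real^'n^'n" and t0 :: real
  assumes t0_pos: "t0 > 0"
    and a_smooth: "smooth_on {0<..} a"
    and a_pos: "\<And>t. t \<ge> t0 \<Longrightarrow> a t > 0"
    and a_incr: "\<And>t. t \<ge> t0 \<Longrightarrow> deriv a t > 0"
    and a_int: "(\<integral>\<^sup>+ s\<in>{t0..}. ennreal (1 / a s) \<partial>lborel) < \<infinity>"
    and sigma_riem: "riemannian_metric \<sigma>"
  shows "\<exists>C1>0. \<forall>T > t0. \<forall>\<phi> :: real \<Rightarrow> real^'n \<Rightarrow> real.
           (\<exists>U. open U \<and> {t0..<T} \<times> UNIV \<subseteq> U \<and> smooth_on U (\<lambda>(t, x). \<phi> t x)) \<and>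
           (\<exists>K. compact K \<and> (\<forall>t\<in>{t0..<T}. \<forall>x. x \<notin> K \<longrightarrow> \<phi> t x = 0)) \<longrightarrow>
           (\<forall>t\<in>{t0..<T}.
              ennreal (sqrt (energy a \<sigma> \<phi> t))
                \<le> ennreal C1 * (ennreal (sqrt (energy a \<sigma> \<phi> t0))
                    + (\<integral>\<^sup>+ s\<in>{t0..<T}. ennreal (a s * L2_sigma \<sigma> (box_g a \<sigma> \<phi> s)) \<partial>lborel)))"
proof (intro exI[of _ "2::real"] conjI allI impI ballI)
  show "(0::real) < 2" by simp
next
  fix T :: real and \<phi> :: "real \<Rightarrow> real^'n \<Rightarrow> real" and t
  assume T: "T > t0"
    and hyp: "(\<exists>U. open U \<and> {t0..<T} \<times> UNIV \<subseteq> U \<and> smooth_on U (\<lambda>(t, x). \<phi> t x)) \<and>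
           (\<exists>K. compact K \<and> (\<forall>t\<in>{t0..<T}. \<forall>x. x \<notin> K \<longrightarrow> \<phi> t x = 0))"
    and t: "t \<in> {t0..<T}"
  obtain U where U: "open U" "{t0..<T} \<times> UNIV \<subseteq> U" "smooth_on U (\<lambda>(t, x). \<phi> t x)" using hyp by blast
  obtain K where K: "compact K" "\<forall>t\<in>{t0..<T}. \<forall>x. x \<notin> K \<longrightarrow> \<phi> t x = 0" using hyp by blast
  interpret W: wave a \<sigma> t0 T \<phi> U K
    using t0_pos a_smooth a_pos a_incr sigma_riem T U K by unfold_locales auto
  show "ennreal (sqrt (energy a \<sigma> \<phi> t))
                \<le> ennreal 2 * (ennreal (sqrt (energy a \<sigma> \<phi> t0))
                    + (\<integral>\<^sup>+ s\<in>{t0..<T}. ennreal (a s * L2_sigma \<sigma> (box_g a \<sigma> \<phi> s)) \<partial>lborel))"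
    by (rule W.final[OF t])
qed


end
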